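(* Let $A=S(n)$, where $n$ is squarefree and every prime divisor of $n$ is at least 7. Let $S:(x_1,\ldots,x_k)$ be an $A$-extremal sequence for the Davenport constant. If $\Omega(n)\geq 3$, then $S$ is equivalent with respect to $A$ to a sequence $(y_1,\ldots,y_k)$ such that there is a prime divisor $p$ of $n$ for which $y_1$ is exactly the one term not divisible by $p$ (i.e. $p\nmid y_1$ and $p\mid y_i$ for $2\leq i\leq k$), and, letting $n'=n/p$, $T:(y_2,\ldots,y_k)$ and $T'$ the sequence in $\mathbb{Z}_{n'}$ which is the image of $T$ under the natural map $\mathbb{Z}_n\to\mathbb{Z}_{n'}$, the sequence $T'$ is a $U(n')$-extremal sequence for the Davenport constant. If $\Omega(n)=2$, then $S:(x_1,x_2)$ is either equivalent with respect to $A$ to a sequence $(y_1,y_2)$ such that there is a prime divisor $p$ of $n$ with $p\nmid y_1$, $p\mid y_2$, and, with $n'=n/p$, the image of $(y_2)$ under the natural map $\mathbb{Z}_n\to\mathbb{Z}_{n'}$ is a $U(n')$-extremal sequence for the Davenport constant; or $S$ is equivalent with respect to $A$ to a sequence $(y_1,y_2)$, where $y_1\in S(n)$ and $-y_2\in U(n)\setminus S(n)$.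
   Context: Here $n$ is odd, $\mathbb{Z}_n$ is the integers mod $n$, $U(n)$ is its group of units, and $S(n)$ is the kernel of the homomorphism $U(n)\to\{1,-1\}$, $a\mapsto\left(\frac{a}{n}\right)$ (the Jacobi symbol). $\Omega(n)$ is the number of prime factors of $n$ counted with multiplicity. For $A\subseteq\mathbb{Z}_m\setminus\{0\}$, $D_A(m)$ is the least $k$ such that every sequence of length $k$ in $\mathbb{Z}_m$ has a (nonempty) $A$-weighted zero-sum subsequence; an $A$-extremal sequence for the Davenport constant is a sequence of length $D_A(m)-1$ with no $A$-weighted zero-sum subsequence. Two sequences $(x_1,\ldots,x_k)$, $(y_1,\ldots,y_k)$ are equivalent with respect to a multiplicative group $A$ if there are $a_1,\ldots,a_k\in A$, a unit $c$ and a permutation $\sigma$ with $y_{\sigma(i)}=c\,a_ix_i$ for all $i$. The natural map $\mathbb{Z}_n\to\mathbb{Z}_m$ (for $m\mid n$) is $a+n\mathbb{Z}\mapsto a+m\mathbb{Z}$. *)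

theory Defs
  imports "HOL-Number_Theory.Number_Theory" "HOL-Computational_Algebra.Squarefree"
begin

text \<open>Elements of Z_m are represented by integers in {0..<m}; sequences by int lists.\<close>

definition Jacobi :: "int \<Rightarrow> nat \<Rightarrow> int" where
  "Jacobi a n = (\<Prod>p\<in>prime_factors n. Legendre a (int p) ^ multiplicity p n)"

definition Uset :: "nat \<Rightarrow> int set" where
  "Uset n = {a \<in> {0..<int n}. coprime a (int n)}"

definition Sset :: "nat \<Rightarrow> int set" where
  "Sset n = {a \<in> Uset n. Jacobi a n = 1}"

definition Omega :: "nat \<Rightarrow> nat" where
  "Omega n = size (prime_factorization n)"

definition is_seq :: "nat \<Rightarrow> int list \<Rightarrow> bool" where
  "is_seq m xs \<longleftrightarrow> set xs \<subseteq> {0..<int m}"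

definition has_wzs :: "int set \<Rightarrow> nat \<Rightarrow> int list \<Rightarrow> bool" where
  "has_wzs A m xs \<longleftrightarrow> (\<exists>I a. I \<noteq> {} \<and> I \<subseteq> {..<length xs} \<and> (\<forall>i\<in>I. a i \<in> A)
      \<and> (\<Sum>i\<in>I. a i * xs ! i) mod int m = 0)"

definition davenport :: "int set \<Rightarrow> nat \<Rightarrow> nat" where
  "davenport A m = (LEAST k. \<forall>xs. length xs = k \<and> is_seq m xs \<longrightarrow> has_wzs A m xs)"

definition extremal :: "int set \<Rightarrow> nat \<Rightarrow> int list \<Rightarrow> bool" where
  "extremal A m xs \<longleftrightarrow> is_seq m xs \<and> length xs = davenport A m - 1 \<and> \<not> has_wzs A m xs"

definition seq_equiv :: "int set \<Rightarrow> nat \<Rightarrow> int list \<Rightarrow> int list \<Rightarrow> bool" where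
  "seq_equiv A m xs ys \<longleftrightarrow> is_seq m xs \<and> is_seq m ys \<and> length xs = length ys \<and>
     (\<exists>a c \<sigma>. (\<forall>i<length xs. a i \<in> A) \<and> c \<in> Uset m \<and>
        bij_betw \<sigma> {..<length xs} {..<length xs} \<and>
        (\<forall>i<length xs. ys ! (\<sigma> i) = (c * a i * xs ! i) mod int m))"

end

theory Submission
  imports Defs "HOL-Number_Theory.Residue_Primitive_Roots"
begin


lemma leg_cong: assumes "[a = b] (mod p)" shows "Legendre a p = Legendre b p"
proof -
  have 1: "[a = 0] (mod p) \<longleftrightarrow> [b = 0] (mod p)" using assms by (simp add: cong_def)
  have 2: "QuadRes p a \<longleftrightarrow> QuadRes p b" unfolding QuadRes_def using assms by (simp add: cong_def)
  show ?thesis unfolding Legendre_def using 1 2 by simp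
qed

lemma leg_mod: "Legendre (a mod p) p = Legendre a p"
  by (rule leg_cong) (simp add: cong_def)

lemma leg_zero: "Legendre a p = 0 \<longleftrightarrow> p dvd a"
  by (simp add: Legendre_def cong_0_iff)

lemma leg_pm: "\<not> p dvd a \<Longrightarrow> Legendre a p = 1 \<or> Legendre a p = -1"
  by (auto simp: Legendre_def cong_0_iff)

lemma leg_one: "p > 1 \<Longrightarrow> Legendre 1 p = 1"
proof -
  assume "p > 1"
  then have "\<not> [1 = 0] (mod p)" by (simp add: cong_def)
  moreover have "QuadRes p 1" unfolding QuadRes_def by (rule exI[of _ 1]) simp
  ultimately show ?thesis by (simp add: Legendre_def)
qed

lemma leg_mult:
  assumes p: "prime p" "2 < p"
  shows "Legendre (a * b) (int p) = Legendre a (int p) * Legendre b (int p)"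
proof -
  let ?h = "(p - 1) div 2"
  have ea: "[Legendre a p = a ^ ?h] (mod p)" by (rule euler_criterion[OF p])
  have eb: "[Legendre b p = b ^ ?h] (mod p)" by (rule euler_criterion[OF p])
  have eab: "[Legendre (a*b) p = (a*b) ^ ?h] (mod p)" by (rule euler_criterion[OF p])
  have m: "[Legendre a p * Legendre b p = a ^ ?h * b ^ ?h] (mod p)" using ea eb by (rule cong_mult)
  have e2: "[Legendre (a*b) p = a ^ ?h * b ^ ?h] (mod p)" using eab by (simp add: power_mult_distrib)
  have c: "[Legendre (a*b) p = Legendre a p * Legendre b p] (mod p)"
    by (rule cong_trans[OF e2 cong_sym[OF m]])
  have r1: "Legendre (a*b) p \<in> {-1,0,1}" "Legendre a p \<in> {-1,0,1}" "Legendre b p \<in> {-1,0,1}"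
    by (auto simp: Legendre_def)
  then have r2: "Legendre a p * Legendre b p \<in> {-1,0,1}" by auto
  from c have d: "int p dvd Legendre (a*b) p - Legendre a p * Legendre b p"
    by (simp add: cong_iff_dvd_diff)
  have "int p > 2" using p by simp
  moreover have "\<bar>Legendre (a*b) p - Legendre a p * Legendre b p\<bar> \<le> 2" using r1(1) r2 by auto
  ultimately have "Legendre (a*b) p - Legendre a p * Legendre b p = 0"
  proof (rule_tac ccontr)
    assume "int p > 2" "\<bar>Legendre (a*b) p - Legendre a p * Legendre b p\<bar> \<le> 2"
       and ne: "Legendre (a*b) p - Legendre a p * Legendre b p \<noteq> 0"
    from dvd_imp_le_int[OF ne d] show False using \<open>int p > 2\<close> \<open>\<bar>_\<bar> \<le> 2\<close> by simp
  qed
  then show ?thesis by simp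
qed

lemma nr_exists:
  assumes p: "prime p" "2 < p"
  shows "\<exists>\<nu>. Legendre \<nu> (int p) = -1"
proof -
  obtain g where g: "residue_primroot p g" using prime_primitive_root_exists[OF _ p(1)] prime_gt_1_nat[OF p(1)] by blast
  have og: "ord p g = p - 1" "coprime p g" using g p(1) by (auto simp: residue_primroot_def totient_prime)
  let ?h = "(p - 1) div 2"
  have h: "0 < ?h" "?h < ord p g" using p og by auto
  have ng: "\<not> [g ^ ?h = 1] (mod p)" by (rule ord_minimal[OF h])
  have ec: "[Legendre (int g) p = int g ^ ?h] (mod p)" by (rule euler_criterion[OF p])
  have nd: "\<not> int p dvd int g"
  proof
    assume "int p dvd int g"
    then have "p dvd g" by simp
    with og(2) have "p dvd 1" by (meson coprime_common_divisor dvd_refl)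
    with p show False by simp
  qed
  have "Legendre (int g) p \<noteq> 1"
  proof
    assume "Legendre (int g) p = 1"
    with ec have "[int g ^ ?h = 1] (mod int p)" by (simp add: cong_sym)
    then have "[int (g ^ ?h) = int 1] (mod int p)" by simp
    then have "[g ^ ?h = 1] (mod p)" by (simp only: cong_int_iff)
    with ng show False by simp
  qed
  with leg_pm[OF nd] show ?thesis by blast
qed

lemma leg_sq: assumes "prime p" "2 < p" "\<not> int p dvd x" shows "Legendre (x * x) (int p) = 1"
  using leg_mult[OF assms(1,2)] leg_pm[OF assms(3)] by auto

lemma leg_pm_prime: assumes "prime p" "\<not> int p dvd x"
  shows "Legendre x (int p) = 1 \<or> Legendre x (int p) = -1"
  using leg_pm[OF assms(2)] .

lemma small_ndvd: assumes "prime p" "7 \<le> p" "0 < k" "k < 7" shows "\<not> int p dvd k"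
proof
  assume "int p dvd k"
  then have "int p \<le> k" using assms(3) by (rule zdvd_imp_le)
  with assms show False by simp
qed

definition trip :: "nat \<Rightarrow> int \<Rightarrow> int \<Rightarrow> int \<Rightarrow> bool" where
  "trip p e1 e2 e3 \<longleftrightarrow> (\<exists>u v w. Legendre u p = e1 \<and> Legendre v p = e2 \<and> Legendre w p = e3
     \<and> [u + v = w] (mod int p))"

context
  fixes p :: nat
  assumes pp: "prime p" and p7: "7 \<le> p"
begin

lemma p2: "2 < p" using p7 by simp

lemma trip_swap: "trip p e1 e2 e3 \<Longrightarrow> trip p e2 e1 e3"
  unfolding trip_def by (metis add.commute)

lemma trip_scale: assumes "trip p e1 e2 e3" shows "trip p (-e1) (-e2) (-e3)"
proof -
  obtain \<nu> where nu: "Legendre \<nu> (int p) = -1" using nr_exists[OF pp p2] by blast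
  obtain u v w where uvw: "Legendre u p = e1" "Legendre v p = e2" "Legendre w p = e3" "[u + v = w] (mod int p)"
    using assms unfolding trip_def by blast
  have "[\<nu> * (u + v) = \<nu> * w] (mod int p)" using uvw(4) by (rule cong_scalar_left)
  then have "[\<nu> * u + \<nu> * v = \<nu> * w] (mod int p)" by (simp add: algebra_simps)
  moreover have "Legendre (\<nu> * u) p = - e1" "Legendre (\<nu> * v) p = - e2" "Legendre (\<nu> * w) p = - e3"
    using leg_mult[OF pp p2] nu uvw by auto
  ultimately show ?thesis unfolding trip_def by blast
qed

lemma trip_i: "trip p 1 1 (-1)"
proof -
  obtain \<nu> where nu: "Legendre \<nu> (int p) = -1" using nr_exists[OF pp p2] by blast
  define S :: "nat set" where "S = {k. 0 < k \<and> k < p \<and> Legendre (int k) p = -1}"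
  have "nat (\<nu> mod int p) \<in> S"
  proof -
    have p0: "int p > 0" using p7 by simp
    have a: "Legendre (\<nu> mod int p) p = -1" using nu by (simp add: leg_mod)
    have b: "\<nu> mod int p \<noteq> 0" using a by (auto simp: Legendre_def cong_def)
    have c: "0 \<le> \<nu> mod int p" "\<nu> mod int p < int p" using p0 by auto
    show ?thesis unfolding S_def using a b c by auto
  qed
  then have ne: "\<exists>k. k \<in> S" by blast
  define s where "s = (LEAST k. k \<in> S)"
  have sS: "s \<in> S" unfolding s_def using ne by (metis LeastI)
  have s1: "s \<noteq> 1" using sS leg_one[of "int p"] p7 unfolding S_def by auto
  have s0: "s > 1" using sS s1 unfolding S_def by auto
  have "s - 1 \<notin> S" unfolding s_def
    by (metis not_less_Least s0 s_def diff_less zero_less_one order.strict_trans)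
  moreover have "0 < s - 1" "s - 1 < p" using s0 sS unfolding S_def by auto
  ultimately have ns: "Legendre (int (s - 1)) p \<noteq> -1" unfolding S_def by auto
  have nd: "\<not> int p dvd int (s - 1)"
  proof
    assume "int p dvd int (s - 1)"
    then have "p dvd (s - 1)" by simp
    with \<open>0 < s - 1\<close> have "p \<le> s - 1" by (simp add: dvd_imp_le)
    with \<open>s - 1 < p\<close> show False by simp
  qed
  have L1: "Legendre (int (s - 1)) p = 1" using ns leg_pm[OF nd] by blast
  have L2: "Legendre (int s) p = -1" using sS unfolding S_def by simp
  have "int (s - 1) + 1 = int s" using s0 by simp
  then show ?thesis unfolding trip_def using L1 L2 leg_one[of "int p"] p7
    by (intro exI[of _ "int (s - 1)"] exI[of _ 1] exI[of _ "int s"]) auto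
qed

lemma trip_ii: "trip p 1 1 1"
proof -
  have n2: "\<not> int p dvd 2" and n3: "\<not> int p dvd 3" and n5: "\<not> int p dvd 5"
    using small_ndvd[OF pp p7] by auto
  have l1: "Legendre 1 p = 1" using leg_one[of "int p"] p7 by simp
  have l4: "Legendre 4 p = 1" using leg_sq[OF pp p2 n2] by simp
  have l9: "Legendre 9 p = 1" using leg_sq[OF pp p2 n3] by simp
  show ?thesis
  proof (cases "Legendre 2 p = 1")
    case True
    then show ?thesis unfolding trip_def using l1
      by (intro exI[of _ 1] exI[of _ 1] exI[of _ 2]) auto
  next
    case False
    then have l2: "Legendre 2 p = -1" using leg_pm[OF n2] by blast
    show ?thesis
    proof (cases "Legendre 5 p = 1")
      case True
      then show ?thesis unfolding trip_def using l1 l4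
        by (intro exI[of _ 1] exI[of _ 4] exI[of _ 5]) auto
    next
      case False
      then have "Legendre 5 p = -1" using leg_pm[OF n5] by blast
      then have "Legendre (2 * 5) p = 1" using l2 leg_mult[OF pp p2, of 2 5] by simp
      then show ?thesis unfolding trip_def using l1 l9
        by (intro exI[of _ 1] exI[of _ 9] exI[of _ 10]) auto
    qed
  qed
qed

lemma trip_iii: "trip p (-1) 1 1"
proof -
  have n1: "\<not> int p dvd -1" using prime_gt_1_nat[OF pp] by simp
  note lm = leg_mult[OF pp p2]
  show ?thesis
  proof (cases "Legendre (-1) p = 1")
    case True
    obtain u v w where uvw: "Legendre u p = 1" "Legendre v p = 1" "Legendre w p = -1" "[u + v = w] (mod int p)"
      using trip_i unfolding trip_def by blast
    have "[(-w) + u = -v] (mod int p)" using uvw(4) by (simp add: cong_iff_dvd_diff algebra_simps)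
    moreover have "Legendre (-w) p = -1" "Legendre (-v) p = 1"
      using lm[of "-1" w] lm[of "-1" v] True uvw by auto
    ultimately show ?thesis unfolding trip_def using uvw(1) by blast
  next
    case False
    then have m1: "Legendre (-1) p = -1" using leg_pm[OF n1] by blast
    obtain u v w where uvw: "Legendre u p = 1" "Legendre v p = 1" "Legendre w p = 1" "[u + v = w] (mod int p)"
      using trip_ii unfolding trip_def by blast
    have "[w + (-v) = u] (mod int p)" using uvw(4) by (simp add: cong_iff_dvd_diff algebra_simps) (metis dvd_minus_iff minus_diff_eq)
    moreover have "Legendre (-v) p = -1"
      using lm[of "-1" v] m1 uvw by auto
    ultimately have "trip p 1 (-1) 1" unfolding trip_def using uvw(1,3) by blast
    then show ?thesis by (rule trip_swap)
  qed
qed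

lemma trip_all: assumes "e1 \<in> {1,-1}" "e2 \<in> {1,-1}" "e3 \<in> {1,-1}" shows "trip p e1 e2 e3"
proof -
  have a: "trip p 1 1 1" "trip p 1 1 (-1)" "trip p (-1) 1 1" by (rule trip_ii, rule trip_i, rule trip_iii)
  have b: "trip p (-1) (-1) (-1)" "trip p (-1) (-1) 1" "trip p 1 (-1) (-1)"
    using trip_scale[OF a(1)] trip_scale[OF a(2)] trip_scale[OF a(3)] by simp_all
  have c: "trip p 1 (-1) 1" "trip p (-1) 1 (-1)" using trip_swap[OF a(3)] trip_swap[OF b(3)] by simp_all
  show ?thesis using assms a b c by auto
qed

lemma inv_leg: assumes "\<not> int p dvd y"
  shows "\<exists>j. [y * j = 1] (mod int p) \<and> Legendre j p = Legendre y p"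
proof -
  have "coprime y (int p)" using prime_imp_coprime[of "int p" y] assms pp
    by (simp add: coprime_commute)
  then obtain j where j: "[y * j = 1] (mod int p)" using cong_solve_coprime_int by blast
  have "Legendre (y * j) p = 1" using leg_cong[OF j] leg_one[of "int p"] p7 by simp
  then have "Legendre y p * Legendre j p = 1" using leg_mult[OF pp p2] by simp
  then have "Legendre j p = Legendre y p" using leg_pm[OF assms] by auto
  with j show ?thesis by blast
qed

lemma sum2:
  assumes e: "e1 \<in> {1,-1}" "e2 \<in> {1,-1}" and t: "\<not> int p dvd t"
  shows "\<exists>u v. Legendre u p = e1 \<and> Legendre v p = e2 \<and> [u + v = t] (mod int p)"
proof -
  have Lt: "Legendre t p \<in> {1,-1}" using leg_pm[OF t] by auto
  obtain u0 v0 w0 where uvw: "Legendre u0 p = e1" "Legendre v0 p = e2" "Legendre w0 p = Legendre t p"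
      "[u0 + v0 = w0] (mod int p)"
    using trip_all[OF e Lt] unfolding trip_def by blast
  have nw: "\<not> int p dvd w0" using uvw(3) Lt leg_zero[of w0 "int p"] by auto
  obtain i where i: "[w0 * i = 1] (mod int p)" "Legendre i p = Legendre w0 p" using inv_leg[OF nw] by blast
  define r where "r = t * i"
  have Lr: "Legendre r p = 1" unfolding r_def using leg_mult[OF pp p2] i(2) uvw(3) Lt by auto
  have "[r * (u0 + v0) = r * w0] (mod int p)" using uvw(4) by (rule cong_scalar_left)
  moreover have "[r * w0 = t * (w0 * i)] (mod int p)" unfolding r_def by (simp add: algebra_simps)
  moreover have "[t * (w0 * i) = t * 1] (mod int p)" using i(1) by (rule cong_scalar_left)
  ultimately have "[r * u0 + r * v0 = t] (mod int p)"
    by (simp add: algebra_simps) (meson cong_trans)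
  moreover have "Legendre (r * u0) p = e1" "Legendre (r * v0) p = e2"
    using leg_mult[OF pp p2] Lr uvw by auto
  ultimately show ?thesis by blast
qed


lemma sumK:
  assumes K: "finite K" "3 \<le> card K" and y: "\<forall>i\<in>K. \<not> int p dvd y i" and e: "\<forall>i\<in>K. e i \<in> {1,-1}"
  shows "\<exists>w. (\<forall>i\<in>K. Legendre (w i) p = e i) \<and> [(\<Sum>i\<in>K. w i * y i) = 0] (mod int p)"
proof -
  have ppi: "prime (int p)" using pp by simp
  have c3: "Suc (Suc (Suc 0)) \<le> card K" using K by simp
  obtain i1 B1 where B1: "K = insert i1 B1" "i1 \<notin> B1" "Suc (Suc 0) \<le> card B1" "finite B1"
    using card_le_Suc_iff[THEN iffD1, OF c3] by blast
  obtain i2 B2 where B2: "B1 = insert i2 B2" "i2 \<notin> B2" "Suc 0 \<le> card B2" "finite B2"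
    using card_le_Suc_iff[THEN iffD1, OF B1(3)] by blast
  obtain i3 K' where B3: "B2 = insert i3 K'" "i3 \<notin> K'" "finite K'"
    using card_le_Suc_iff[THEN iffD1, OF B2(3)] by blast
  obtain \<nu> where nu: "Legendre \<nu> p = -1" using nr_exists[OF pp p2] by blast
  define rep where "rep = (\<lambda>e::int. if e = 1 then 1 else \<nu>)"
  have rep: "\<And>i. i \<in> K \<Longrightarrow> Legendre (rep (e i)) p = e i"
    using e nu leg_one[of "int p"] p7 by (auto simp: rep_def)
  have repnd: "\<And>i. i \<in> K \<Longrightarrow> \<not> int p dvd rep (e i)"
  proof -
    fix i assume "i \<in> K"
    then have "Legendre (rep (e i)) p \<noteq> 0" using rep e by fastforce
    then show "\<not> int p dvd rep (e i)" by (simp add: leg_zero)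
  qed
  define s where "s = (\<Sum>i\<in>K'. rep (e i) * y i)"
  have iK: "i1 \<in> K" "i2 \<in> K" "i3 \<in> K" using B1 B2 B3 by auto
  have dd: "i1 \<noteq> i2" "i1 \<noteq> i3" "i2 \<noteq> i3" "i1 \<notin> K'" "i2 \<notin> K'" "i3 \<notin> K'" using B1 B2 B3 by auto
  have y3: "\<not> int p dvd y i3" using y iK by auto
  have "\<exists>w3. Legendre w3 p = e i3 \<and> \<not> int p dvd (- s - w3 * y i3)"
  proof (cases "int p dvd (- s - rep (e i3) * y i3)")
    case False then show ?thesis using rep[OF iK(3)] by blast
  next
    case True
    have n3: "\<not> int p dvd 3" using small_ndvd[OF pp p7] by simp
    have n2: "\<not> int p dvd 2" using small_ndvd[OF pp p7] by simp
    have l4: "Legendre 4 p = 1" using leg_sq[OF pp p2 n2] by simp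
    have n4: "Legendre (4 * rep (e i3)) p = e i3"
      using leg_mult[OF pp p2, of 4 "rep (e i3)"] l4 rep[OF iK(3)] by simp
    have "\<not> int p dvd (- s - 4 * rep (e i3) * y i3)"
    proof
      assume h: "int p dvd (- s - 4 * rep (e i3) * y i3)"
      have "int p dvd (- s - rep (e i3) * y i3) - (- s - 4 * rep (e i3) * y i3)"
        using True h by (rule dvd_diff)
      then have "int p dvd 3 * (rep (e i3) * y i3)" by (simp add: algebra_simps)
      then show False using n3 repnd[OF iK(3)] y3 ppi by (simp add: prime_dvd_mult_iff)
    qed
    then show ?thesis using n4 by blast
  qed
  then obtain w3 where w3: "Legendre w3 p = e i3" "\<not> int p dvd (- s - w3 * y i3)" by blast
  define t where "t = - s - w3 * y i3"
  have y1: "\<not> int p dvd y i1" and y2: "\<not> int p dvd y i2" using y iK by auto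
  have f: "e i1 * Legendre (y i1) p \<in> {1,-1}" "e i2 * Legendre (y i2) p \<in> {1,-1}"
    using e iK leg_pm[OF y1] leg_pm[OF y2] by auto
  obtain u v where uv: "Legendre u p = e i1 * Legendre (y i1) p" "Legendre v p = e i2 * Legendre (y i2) p"
      "[u + v = t] (mod int p)"
    using sum2[OF f] w3(2) unfolding t_def by blast
  obtain j1 where j1: "[y i1 * j1 = 1] (mod int p)" "Legendre j1 p = Legendre (y i1) p" using inv_leg[OF y1] by blast
  obtain j2 where j2: "[y i2 * j2 = 1] (mod int p)" "Legendre j2 p = Legendre (y i2) p" using inv_leg[OF y2] by blast
  define w where "w = (\<lambda>i. if i = i1 then u * j1 else if i = i2 then v * j2 else if i = i3 then w3 else rep (e i))"
  have Lw: "\<forall>i\<in>K. Legendre (w i) p = e i"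
  proof
    fix i assume iK': "i \<in> K"
    have sq1: "Legendre (y i1) p * Legendre (y i1) p = 1" using leg_pm[OF y1] by auto
    have sq2: "Legendre (y i2) p * Legendre (y i2) p = 1" using leg_pm[OF y2] by auto
    show "Legendre (w i) p = e i"
      using leg_mult[OF pp p2, of u j1] leg_mult[OF pp p2, of v j2] uv j1 j2 sq1 sq2 w3 rep[OF iK'] dd
      by (auto simp: w_def mult.assoc)
  qed
  have sK': "(\<Sum>i\<in>K'. w i * y i) = s" unfolding s_def
    by (rule sum.cong) (use dd in \<open>auto simp: w_def\<close>)
  have Ksplit: "K = insert i1 (insert i2 (insert i3 K'))" using B1 B2 B3 by simp
  have tot: "(\<Sum>i\<in>K. w i * y i) = u * j1 * y i1 + (v * j2 * y i2 + (w3 * y i3 + s))"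
    unfolding Ksplit using B3(3) dd sK' by (simp add: w_def)
  have d1: "int p dvd u * j1 * y i1 - u"
  proof -
    have "int p dvd y i1 * j1 - 1" using j1(1) by (simp add: cong_iff_dvd_diff)
    then have "int p dvd u * (y i1 * j1 - 1)" by simp
    then show ?thesis by (simp add: algebra_simps)
  qed
  have d2: "int p dvd v * j2 * y i2 - v"
  proof -
    have "int p dvd y i2 * j2 - 1" using j2(1) by (simp add: cong_iff_dvd_diff)
    then have "int p dvd v * (y i2 * j2 - 1)" by simp
    then show ?thesis by (simp add: algebra_simps)
  qed
  have d3: "int p dvd u + v - t" using uv(3) by (simp add: cong_iff_dvd_diff)
  have "(\<Sum>i\<in>K. w i * y i) - 0 = (u * j1 * y i1 - u) + (v * j2 * y i2 - v) + (u + v - t)"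
    unfolding tot t_def by (simp add: algebra_simps)
  then have "int p dvd (\<Sum>i\<in>K. w i * y i) - 0" using d1 d2 d3 by (metis dvd_add)
  then have "[(\<Sum>i\<in>K. w i * y i) = 0] (mod int p)" by (simp add: cong_iff_dvd_diff)
  with Lw show ?thesis by blast
qed

end


lemma sf_nz: "squarefree (m::nat) \<Longrightarrow> m \<noteq> 0" by (metis not_squarefree_0)

lemma sf_mult1: assumes "squarefree (m::nat)" "p \<in> prime_factors m" shows "multiplicity p m = 1"
  using squarefree_factorial_semiring'[of m] assms sf_nz by auto

lemma jac_sf: assumes "squarefree m" shows "Jacobi a m = (\<Prod>p\<in>prime_factors m. Legendre a (int p))"
  unfolding Jacobi_def using sf_mult1[OF assms] by (intro prod.cong) auto

lemma dvd_sf_nat: assumes "squarefree (m::nat)" "\<forall>p\<in>prime_factors m. p dvd z" shows "m dvd z"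
proof (cases "z = 0")
  case True then show ?thesis by simp
next
  case False
  have m0: "m \<noteq> 0" using assms(1) by (rule sf_nz)
  show ?thesis
  proof (rule multiplicity_le_imp_dvd[OF m0])
    fix q :: nat assume q: "prime q"
    show "multiplicity q m \<le> multiplicity q z"
    proof (cases "q dvd m")
      case True
      then have qP: "q \<in> prime_factors m" using q m0 by (simp add: in_prime_factors_iff)
      have "multiplicity q m = 1" using sf_mult1[OF assms(1) qP] .
      moreover have "multiplicity q z > 0"
        using prime_multiplicity_gt_zero_iff[of q z] q False assms(2) qP by auto
      ultimately show ?thesis by simp
    next
      case False then show ?thesis by (simp add: not_dvd_imp_multiplicity_0)
    qed
  qed
qed

lemma dvd_sf_int: assumes "squarefree (m::nat)" "\<forall>p\<in>prime_factors m. int p dvd z" shows "int m dvd z"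
proof -
  have "\<forall>p\<in>prime_factors m. p dvd nat \<bar>z\<bar>" using assms(2) by simp
  then have "m dvd nat \<bar>z\<bar>" by (rule dvd_sf_nat[OF assms(1)])
  then show ?thesis by simp
qed

lemma cop_sf: assumes "m \<noteq> 0" "\<forall>p\<in>prime_factors m. \<not> int p dvd a" shows "coprime a (int m)"
proof (rule ccontr)
  assume nc: "\<not> coprime a (int m)"
  have g0: "gcd a (int m) \<noteq> 0" using assms(1) by simp
  have gu: "\<not> is_unit (gcd a (int m))" using nc by (simp add: coprime_iff_gcd_eq_1)
  obtain q where q: "q dvd gcd a (int m)" "prime q" using prime_divisor_exists[OF g0 gu] by blast
  have q0: "q > 0" using q(2) by (simp add: prime_gt_0_int)
  have qa: "q dvd a" and qm: "q dvd int m" using q(1) by auto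
  have qn: "int (nat q) = q" using q0 by simp
  have "nat q dvd m" using qm qn by (metis int_dvd_int_iff)
  moreover have "prime (nat q)" using q(2) by simp
  ultimately have "nat q \<in> prime_factors m" using assms(1) by (simp add: in_prime_factors_iff)
  moreover have "int (nat q) dvd a" using qa q0 by simp
  ultimately show False using assms(2) by blast
qed

lemma crt_point:
  assumes sf: "squarefree (m::nat)" and nd: "\<forall>p\<in>prime_factors m. \<not> int p dvd f p"
  shows "\<exists>a. a \<in> Uset m \<and> (\<forall>p\<in>prime_factors m. [a = f p] (mod int p))
           \<and> Jacobi a m = (\<Prod>p\<in>prime_factors m. Legendre (f p) (int p))"
proof -
  let ?P = "prime_factors m"
  have cop: "\<forall>i\<in>?P. \<forall>j\<in>?P. i \<noteq> j \<longrightarrow> coprime (id i) (id j)" by (auto intro: primes_coprime)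
  obtain x where x: "\<forall>p\<in>?P. [x = nat (f p mod int p)] (mod id p)"
    using chinese_remainder_nat[OF finite_set_mset cop, where u = "\<lambda>p. nat (f p mod int p)"] by blast
  define a where "a = int x mod int m"
  have m0: "m \<noteq> 0" using sf by (rule sf_nz)
  have ca: "\<forall>p\<in>?P. [a = f p] (mod int p)"
  proof
    fix p assume pP: "p \<in> ?P"
    have pd: "int p dvd int m" using pP by (simp add: in_prime_factors_iff)
    have 1: "[a = int x] (mod int p)" unfolding a_def using pd by (simp add: cong_def mod_mod_cancel)
    have pp0: "int p > 0" using pP by (simp add: in_prime_factors_iff prime_gt_0_nat)
    have "[x = nat (f p mod int p)] (mod p)" using x pP by simp
    then have 2: "[int x = int (nat (f p mod int p))] (mod int p)" by (simp only: cong_int_iff)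
    have 3: "int (nat (f p mod int p)) = f p mod int p" using pp0 by simp
    have 4: "[f p mod int p = f p] (mod int p)" by (simp add: cong_def)
    have "[a = f p mod int p] (mod int p)" using cong_trans[OF 1 2] 3 by simp
    then show "[a = f p] (mod int p)" using 4 by (rule cong_trans)
  qed
  have ndA: "\<forall>p\<in>?P. \<not> int p dvd a"
  proof
    fix p assume pP: "p \<in> ?P"
    show "\<not> int p dvd a" using cong_dvd_iff[OF ca[rule_format, OF pP]] nd pP by simp
  qed
  have "a \<in> Uset m" unfolding Uset_def a_def using cop_sf[OF m0] ndA m0 by (auto simp: a_def)
  moreover have "Jacobi a m = (\<Prod>p\<in>?P. Legendre (f p) (int p))"
    unfolding jac_sf[OF sf] using ca by (intro prod.cong) (auto intro: leg_cong)
  ultimately show ?thesis using ca by blast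
qed

lemma crt_finish:
  assumes sf: "squarefree m" and I: "I \<noteq> {}" "I \<subseteq> {..<length xs}"
    and R1: "\<forall>p\<in>prime_factors m. \<forall>i\<in>I. \<not> int p dvd W p i"
    and R2: "\<forall>p\<in>prime_factors m. int p dvd (\<Sum>i\<in>I. W p i * xs ! i)"
    and R3: "\<forall>i\<in>I. (\<Prod>p\<in>prime_factors m. Legendre (W p i) (int p)) = 1"
  shows "has_wzs (Sset m) m xs"
proof -
  have "\<forall>i\<in>I. \<exists>a. a \<in> Uset m \<and> (\<forall>p\<in>prime_factors m. [a = W p i] (mod int p))
           \<and> Jacobi a m = (\<Prod>p\<in>prime_factors m. Legendre (W p i) (int p))"
  proof
    fix i assume iI: "i \<in> I"
    show "\<exists>a. a \<in> Uset m \<and> (\<forall>p\<in>prime_factors m. [a = W p i] (mod int p))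
           \<and> Jacobi a m = (\<Prod>p\<in>prime_factors m. Legendre (W p i) (int p))"
      by (rule crt_point[OF sf, where f = "\<lambda>p. W p i"]) (use R1 iI in blast)
  qed
  from bchoice[OF this] obtain a where a: "\<forall>i\<in>I. a i \<in> Uset m \<and> (\<forall>p\<in>prime_factors m. [a i = W p i] (mod int p))
           \<and> Jacobi (a i) m = (\<Prod>p\<in>prime_factors m. Legendre (W p i) (int p))" by blast
  have aS: "\<forall>i\<in>I. a i \<in> Sset m" using a R3 by (simp add: Sset_def)
  have "\<forall>p\<in>prime_factors m. int p dvd (\<Sum>i\<in>I. a i * xs ! i)"
  proof
    fix p assume pP: "p \<in> prime_factors m"
    have cs: "[(\<Sum>i\<in>I. a i * xs ! i) = (\<Sum>i\<in>I. W p i * xs ! i)] (mod int p)"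
      by (rule cong_sum) (use a pP in \<open>auto intro: cong_scalar_right\<close>)
    show "int p dvd (\<Sum>i\<in>I. a i * xs ! i)" using R2 pP cong_dvd_iff[OF cs] by simp
  qed
  then have "int m dvd (\<Sum>i\<in>I. a i * xs ! i)" by (rule dvd_sf_int[OF sf])
  then have "(\<Sum>i\<in>I. a i * xs ! i) mod int m = 0" by simp
  then show ?thesis unfolding has_wzs_def
    by (intro exI[of _ I] exI[of _ a]) (use I aS in blast)
qed


lemma prod_pm: "\<forall>x\<in>A. f x \<in> {1,-1::int} \<Longrightarrow> prod f A \<in> {1,-1}"
proof (induction A rule: infinite_finite_induct)
  case (insert x F)
  then show ?case by auto
qed auto

lemma pm_sq: "(e::int) \<in> {1,-1} \<Longrightarrow> e * e = 1" by auto

lemma sum_reduce: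
  assumes "finite I" "int p dvd (\<Sum>i\<in>{i\<in>I. \<not> int p dvd xs ! i}. f i)"
    "\<forall>i\<in>I. int p dvd xs ! i \<longrightarrow> int p dvd f i"
  shows "int p dvd (\<Sum>i\<in>I. f i)"
proof -
  let ?Ip = "{i\<in>I. \<not> int p dvd xs ! i}"
  have "sum f I = sum f (I - ?Ip) + sum f ?Ip" using assms(1) by (intro sum.subset_diff) auto
  moreover have "int p dvd sum f (I - ?Ip)" using assms(3) by (intro dvd_sum) auto
  ultimately show ?thesis using assms(2) by simp
qed

context
  fixes p :: nat
  assumes pp: "prime p" and p7: "7 \<le> p"
begin

lemma LS3:
  assumes I: "finite I" and c: "3 \<le> card {i\<in>I. \<not> int p dvd xs ! i}" and e: "\<forall>i\<in>I. e i \<in> {1,-1}"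
  shows "\<exists>w. (\<forall>i\<in>I. Legendre (w i) p = e i) \<and> int p dvd (\<Sum>i\<in>I. w i * xs ! i)"
proof -
  let ?Ip = "{i\<in>I. \<not> int p dvd xs ! i}"
  have fin: "finite ?Ip" using I by simp
  obtain w1 where w1: "\<forall>i\<in>?Ip. Legendre (w1 i) p = e i" "[(\<Sum>i\<in>?Ip. w1 i * xs ! i) = 0] (mod int p)"
    using sumK[OF pp p7 fin c, of "\<lambda>i. xs ! i" e] e by auto
  obtain \<nu> where nu: "Legendre \<nu> p = -1" using nr_exists[OF pp p2[OF pp p7]] by blast
  define w where "w = (\<lambda>i. if i \<in> ?Ip then w1 i else if e i = 1 then 1 else \<nu>)"
  have "\<forall>i\<in>I. Legendre (w i) p = e i"
    using w1(1) e nu leg_one[of "int p"] p7 by (auto simp: w_def)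
  moreover have "int p dvd (\<Sum>i\<in>I. w i * xs ! i)"
  proof (rule sum_reduce[OF I])
    have "(\<Sum>i\<in>?Ip. w i * xs ! i) = (\<Sum>i\<in>?Ip. w1 i * xs ! i)" by (rule sum.cong) (auto simp: w_def)
    then show "int p dvd (\<Sum>i\<in>?Ip. w i * xs ! i)" using w1(2) by (simp add: cong_0_iff)
  qed auto
  ultimately show ?thesis by blast
qed

lemma LSgen:
  assumes I: "finite I" and c: "card {i\<in>I. \<not> int p dvd xs ! i} \<noteq> 1"
  shows "\<exists>w. (\<forall>i\<in>I. \<not> int p dvd w i) \<and> int p dvd (\<Sum>i\<in>I. w i * xs ! i)
            \<and> (u \<in> {i\<in>I. \<not> int p dvd xs ! i} \<longrightarrow> Legendre (w u) p = 1)"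
proof -
  let ?Ip = "{i\<in>I. \<not> int p dvd xs ! i}"
  have ppi: "prime (int p)" using pp by simp
  have p1: "int p > 1" using p7 by simp
  consider "card ?Ip = 0" | "card ?Ip = 2" | "3 \<le> card ?Ip" using c by linarith
  then show ?thesis
  proof cases
    case 1
    then have e: "?Ip = {}" using I by simp
    have "int p dvd (\<Sum>i\<in>I. 1 * xs ! i)" by (rule dvd_sum) (use e in auto)
    then show ?thesis using p1 e by (intro exI[of _ "\<lambda>_. 1"]) auto
  next
    case 2
    then obtain a0 b0 where ab0: "?Ip = {a0, b0}" "a0 \<noteq> b0" by (auto simp: card_2_iff)
    obtain a b where ab: "?Ip = {a, b}" "a \<noteq> b" "b \<noteq> u"
    proof (cases "b0 = u")
      case True then show ?thesis using that[of b0 a0] ab0 by (simp add: insert_commute)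
    next
      case False then show ?thesis using that[of a0 b0] ab0 by simp
    qed
    have xa: "\<not> int p dvd xs ! a" and xb: "\<not> int p dvd xs ! b" and aI: "a \<in> I" and bI: "b \<in> I"
      using ab(1) by (metis (no_types, lifting) insertCI mem_Collect_eq)+
    define w where "w = (\<lambda>k. if k = a then xs ! b * xs ! b else if k = b then - (xs ! a * xs ! b) else 1)"
    have nz: "\<forall>i\<in>I. \<not> int p dvd w i"
      using xa xb ppi p1 by (auto simp: w_def prime_dvd_mult_iff)
    have "int p dvd (\<Sum>i\<in>I. w i * xs ! i)"
    proof (rule sum_reduce[OF I])
      have "(\<Sum>i\<in>?Ip. w i * xs ! i) = w a * xs ! a + w b * xs ! b" using ab(1,2) by simp
      also have "\<dots> = 0" using ab(2) by (simp add: w_def algebra_simps)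
      finally show "int p dvd (\<Sum>i\<in>?Ip. w i * xs ! i)" by simp
    qed auto
    moreover have "u \<in> ?Ip \<longrightarrow> Legendre (w u) p = 1"
      using ab leg_sq[OF pp p2[OF pp p7] xb] by (auto simp: w_def)
    ultimately show ?thesis using nz by blast
  next
    case 3
    obtain w where w: "\<forall>i\<in>I. Legendre (w i) p = 1" "int p dvd (\<Sum>i\<in>I. w i * xs ! i)"
      using LS3[OF I 3, of "\<lambda>_. 1"] by auto
    have "\<forall>i\<in>I. \<not> int p dvd w i" using w(1) by (auto simp: leg_zero[symmetric])
    then show ?thesis using w by blast
  qed
qed

end


definition isunit :: "nat \<Rightarrow> int \<Rightarrow> bool" where
  "isunit m x \<longleftrightarrow> (\<forall>p\<in>prime_factors m. \<not> int p dvd x)"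

lemma ppr: "p \<in> prime_factors m \<Longrightarrow> prime p" by (simp add: in_prime_factors_iff)

lemma G:
  assumes sf: "squarefree m" and P7: "\<forall>p\<in>prime_factors m. 7 \<le> p"
    and I: "I \<noteq> {}" "I \<subseteq> {..<length xs}"
    and C1: "\<forall>p\<in>prime_factors m. card {i\<in>I. \<not> int p dvd xs ! i} \<noteq> 1"
    and C2: "(\<exists>p0\<in>prime_factors m. 3 \<le> card {i\<in>I. \<not> int p0 dvd xs ! i})
           \<or> (\<forall>i\<in>I. \<forall>j\<in>I. isunit m (xs ! i) \<longrightarrow> isunit m (xs ! j) \<longrightarrow> i = j)"
  shows "has_wzs (Sset m) m xs"
proof -
  let ?P = "prime_factors m"
  have finI: "finite I" using I(2) finite_subset by blast
  have finP: "finite ?P" by simp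
  have P1: "\<And>p. p \<in> ?P \<Longrightarrow> int p > 1" using P7 by fastforce
  from C2 show ?thesis
  proof
    assume "\<exists>p0\<in>?P. 3 \<le> card {i\<in>I. \<not> int p0 dvd xs ! i}"
    then obtain p0 where p0: "p0 \<in> ?P" "3 \<le> card {i\<in>I. \<not> int p0 dvd xs ! i}" by blast
    have "\<forall>p\<in>?P. \<exists>w. (\<forall>i\<in>I. \<not> int p dvd w i) \<and> int p dvd (\<Sum>i\<in>I. w i * xs ! i)"
    proof
      fix p assume pP: "p \<in> ?P"
      show "\<exists>w. (\<forall>i\<in>I. \<not> int p dvd w i) \<and> int p dvd (\<Sum>i\<in>I. w i * xs ! i)"
        using LSgen[OF ppr[OF pP] P7[rule_format, OF pP] finI C1[rule_format, OF pP], of 0] by blast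
    qed
    from bchoice[OF this] obtain w0 where
      w0: "\<forall>p\<in>?P. (\<forall>i\<in>I. \<not> int p dvd w0 p i) \<and> int p dvd (\<Sum>i\<in>I. w0 p i * xs ! i)" by blast
    define E where "E i = (\<Prod>p\<in>?P - {p0}. Legendre (w0 p i) (int p))" for i
    have Epm: "\<forall>i\<in>I. E i \<in> {1,-1}"
    proof
      fix i assume iI: "i \<in> I"
      show "E i \<in> {1,-1}" unfolding E_def
        by (rule prod_pm) (use w0 iI leg_pm in blast)
    qed
    obtain v where v: "\<forall>i\<in>I. Legendre (v i) p0 = E i" "int p0 dvd (\<Sum>i\<in>I. v i * xs ! i)"
      using LS3[OF ppr[OF p0(1)] P7[rule_format, OF p0(1)] finI p0(2) Epm] by blast
    define W where "W p i = (if p = p0 then v i else w0 p i)" for p i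
    show ?thesis
    proof (rule crt_finish[OF sf I, of W])
      show "\<forall>p\<in>?P. \<forall>i\<in>I. \<not> int p dvd W p i"
      proof (intro ballI)
        fix p i assume pP: "p \<in> ?P" and iI: "i \<in> I"
        show "\<not> int p dvd W p i"
        proof (cases "p = p0")
          case True
          then have "Legendre (W p i) p \<noteq> 0" using v(1) Epm iI by (auto simp: W_def)
          then show ?thesis by (simp add: leg_zero)
        next
          case False then show ?thesis using w0 pP iI by (simp add: W_def)
        qed
      qed
      show "\<forall>p\<in>?P. int p dvd (\<Sum>i\<in>I. W p i * xs ! i)"
      proof
        fix p assume pP: "p \<in> ?P"
        show "int p dvd (\<Sum>i\<in>I. W p i * xs ! i)"
        proof (cases "p = p0")
          case True then show ?thesis using v(2) by (simp add: W_def)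
        next
          case False then show ?thesis using w0 pP by (simp add: W_def)
        qed
      qed
      show "\<forall>i\<in>I. (\<Prod>p\<in>?P. Legendre (W p i) (int p)) = 1"
      proof
        fix i assume iI: "i \<in> I"
        have "(\<Prod>p\<in>?P. Legendre (W p i) (int p)) = Legendre (W p0 i) p0 * (\<Prod>p\<in>?P - {p0}. Legendre (W p i) (int p))"
          by (rule prod.remove[OF finP p0(1)])
        also have "(\<Prod>p\<in>?P - {p0}. Legendre (W p i) (int p)) = E i"
          unfolding E_def by (rule prod.cong) (auto simp: W_def)
        also have "Legendre (W p0 i) p0 = E i" using v(1) iI by (simp add: W_def)
        finally show "(\<Prod>p\<in>?P. Legendre (W p i) (int p)) = 1" using pm_sq Epm iI by simp
      qed
    qed
  next
    assume uq: "\<forall>i\<in>I. \<forall>j\<in>I. isunit m (xs ! i) \<longrightarrow> isunit m (xs ! j) \<longrightarrow> i = j"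
    obtain u where u: "\<forall>i\<in>I. isunit m (xs ! i) \<longrightarrow> i = u"
    proof (cases "\<exists>i\<in>I. isunit m (xs ! i)")
      case True
      then obtain i0 where "i0 \<in> I" "isunit m (xs ! i0)" by blast
      then show ?thesis using that[of i0] uq by blast
    next
      case False then show ?thesis using that[of 0] by blast
    qed
    have "\<forall>p\<in>?P. \<exists>w. (\<forall>i\<in>I. \<not> int p dvd w i) \<and> int p dvd (\<Sum>i\<in>I. w i * xs ! i)
            \<and> (u \<in> {i\<in>I. \<not> int p dvd xs ! i} \<longrightarrow> Legendre (w u) p = 1)"
    proof
      fix p assume pP: "p \<in> ?P"
      show "\<exists>w. (\<forall>i\<in>I. \<not> int p dvd w i) \<and> int p dvd (\<Sum>i\<in>I. w i * xs ! i)
            \<and> (u \<in> {i\<in>I. \<not> int p dvd xs ! i} \<longrightarrow> Legendre (w u) p = 1)"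
        by (rule LSgen[OF ppr[OF pP] P7[rule_format, OF pP] finI C1[rule_format, OF pP]])
    qed
    from bchoice[OF this] obtain w0 where
      w0: "\<forall>p\<in>?P. (\<forall>i\<in>I. \<not> int p dvd w0 p i) \<and> int p dvd (\<Sum>i\<in>I. w0 p i * xs ! i)
            \<and> (u \<in> {i\<in>I. \<not> int p dvd xs ! i} \<longrightarrow> Legendre (w0 p u) p = 1)" by blast
    define d where "d i = (SOME q. q \<in> ?P \<and> int q dvd xs ! i)" for i
    have d: "\<And>i. \<not> isunit m (xs ! i) \<Longrightarrow> d i \<in> ?P \<and> int (d i) dvd xs ! i"
    proof -
      fix i assume "\<not> isunit m (xs ! i)"
      then have "\<exists>q. q \<in> ?P \<and> int q dvd xs ! i" by (auto simp: isunit_def)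
      then show "d i \<in> ?P \<and> int (d i) dvd xs ! i" unfolding d_def by (rule someI_ex)
    qed
    define E where "E i = (\<Prod>p\<in>?P - {d i}. Legendre (w0 p i) (int p))" for i
    have Epm: "\<forall>i\<in>I. E i \<in> {1,-1}"
    proof
      fix i assume iI: "i \<in> I"
      show "E i \<in> {1,-1}" unfolding E_def
        by (rule prod_pm) (use w0 iI leg_pm in blast)
    qed
    define nu where "nu p = (SOME \<nu>. Legendre \<nu> (int p) = -1)" for p
    have nu: "\<And>p. p \<in> ?P \<Longrightarrow> Legendre (nu p) (int p) = -1"
    proof -
      fix p assume pP: "p \<in> ?P"
      have "\<exists>\<nu>. Legendre \<nu> (int p) = -1" using nr_exists[OF ppr[OF pP]] P7 pP by fastforce
      then show "Legendre (nu p) (int p) = -1" unfolding nu_def by (rule someI_ex)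
    qed
    define W where "W p i = (if \<not> isunit m (xs ! i) \<and> p = d i then (if E i = 1 then 1 else nu p) else w0 p i)" for p i
    have LW: "\<And>p i. p \<in> ?P \<Longrightarrow> i \<in> I \<Longrightarrow> \<not> isunit m (xs ! i) \<Longrightarrow> p = d i \<Longrightarrow> Legendre (W p i) p = E i"
    proof -
      fix p i assume pP: "p \<in> ?P" and iI: "i \<in> I" and nu1: "\<not> isunit m (xs ! i)" and pd: "p = d i"
      show "Legendre (W p i) p = E i"
        using nu[OF pP] leg_one[of "int p"] P1[OF pP] Epm iI nu1 pd by (auto simp: W_def)
    qed
    show ?thesis
    proof (rule crt_finish[OF sf I, of W])
      show "\<forall>p\<in>?P. \<forall>i\<in>I. \<not> int p dvd W p i"
      proof (intro ballI)
        fix p i assume pP: "p \<in> ?P" and iI: "i \<in> I"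
        show "\<not> int p dvd W p i"
        proof (cases "\<not> isunit m (xs ! i) \<and> p = d i")
          case True
          then have "Legendre (W p i) p \<noteq> 0" using LW[OF pP iI] Epm iI by auto
          then show ?thesis by (simp add: leg_zero)
        next
          case False
          then have "W p i = w0 p i" unfolding W_def by presburger
          then show ?thesis using w0 pP iI by simp
        qed
      qed
      show "\<forall>p\<in>?P. int p dvd (\<Sum>i\<in>I. W p i * xs ! i)"
      proof
        fix p assume pP: "p \<in> ?P"
        have "(\<Sum>i\<in>I. W p i * xs ! i) = (\<Sum>i\<in>I. w0 p i * xs ! i) + (\<Sum>i\<in>I. (W p i - w0 p i) * xs ! i)"
          by (simp add: sum.distrib[symmetric] algebra_simps)
        moreover have "int p dvd (\<Sum>i\<in>I. (W p i - w0 p i) * xs ! i)"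
        proof (rule dvd_sum)
          fix i assume "i \<in> I"
          show "int p dvd (W p i - w0 p i) * xs ! i"
          proof (cases "\<not> isunit m (xs ! i) \<and> p = d i")
            case True then show ?thesis using d by simp
          next
            case False
            then have "W p i = w0 p i" unfolding W_def by presburger
            then show ?thesis by simp
          qed
        qed
        ultimately show "int p dvd (\<Sum>i\<in>I. W p i * xs ! i)" using w0 pP by simp
      qed
      show "\<forall>i\<in>I. (\<Prod>p\<in>?P. Legendre (W p i) (int p)) = 1"
      proof
        fix i assume iI: "i \<in> I"
        show "(\<Prod>p\<in>?P. Legendre (W p i) (int p)) = 1"
        proof (cases "isunit m (xs ! i)")
          case True
          then have iu: "i = u" using u iI by blast
          have "\<forall>p\<in>?P. Legendre (W p i) (int p) = 1"
            using True w0 iI iu by (auto simp: W_def isunit_def)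
          then show ?thesis by simp
        next
          case False
          have dP: "d i \<in> ?P" using d[OF False] by blast
          have "(\<Prod>p\<in>?P. Legendre (W p i) (int p)) = Legendre (W (d i) i) (d i) * (\<Prod>p\<in>?P - {d i}. Legendre (W p i) (int p))"
            by (rule prod.remove[OF finP dP])
          also have "(\<Prod>p\<in>?P - {d i}. Legendre (W p i) (int p)) = E i"
            unfolding E_def by (rule prod.cong) (auto simp: W_def)
          also have "Legendre (W (d i) i) (d i) = E i" using LW[OF dP iI False] by simp
          finally show ?thesis using pm_sq Epm iI by simp
        qed
      qed
    qed
  qed
qed


lemma easy_free:
  assumes AU: "A \<subseteq> Uset m"
    and H: "\<forall>I. I \<noteq> {} \<and> I \<subseteq> {..<length xs} \<longrightarrow> (\<exists>p\<in>prime_factors m. card {i\<in>I. \<not> int p dvd xs ! i} = 1)"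
  shows "\<not> has_wzs A m xs"
proof
  assume "has_wzs A m xs"
  then obtain I a where Ia: "I \<noteq> {}" "I \<subseteq> {..<length xs}" "\<forall>i\<in>I. a i \<in> A"
      "(\<Sum>i\<in>I. a i * xs ! i) mod int m = 0" unfolding has_wzs_def by (elim exE conjE)
  obtain p where pP: "p \<in> prime_factors m" and c1: "card {i\<in>I. \<not> int p dvd xs ! i} = 1"
    using H[rule_format, OF conjI[OF Ia(1) Ia(2)]] by (elim bexE)
  obtain j where j: "{i\<in>I. \<not> int p dvd xs ! i} = {j}" using card_1_singletonE[OF c1] by blast
  have finI: "finite I" using Ia(2) finite_subset by blast
  have "j \<in> {i\<in>I. \<not> int p dvd xs ! i}" using j by simp
  then have jI: "j \<in> I" and xj: "\<not> int p dvd xs ! j" by simp_all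
  have ppi: "prime (int p)" using ppr[OF pP] by simp
  have pm: "int p dvd int m" using pP by (simp add: in_prime_factors_iff)
  have aj: "\<not> int p dvd a j"
  proof
    assume h: "int p dvd a j"
    have "a j \<in> Uset m" using Ia(3) jI AU by blast
    then have "coprime (a j) (int m)" by (simp add: Uset_def)
    then have "is_unit (int p)" using h pm by (rule coprime_common_divisor)
    with ppi show False by simp
  qed
  have "int m dvd (\<Sum>i\<in>I. a i * xs ! i)" using Ia(4) by (simp add: dvd_eq_mod_eq_0)
  then have S: "int p dvd (\<Sum>i\<in>I. a i * xs ! i)" by (rule dvd_trans[OF pm])
  have Seq: "(\<Sum>i\<in>I. a i * xs ! i) = (\<Sum>i\<in>I - {j}. a i * xs ! i) + a j * xs ! j"
    using finI jI by (simp add: sum.remove add.commute)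
  have R: "int p dvd (\<Sum>i\<in>I - {j}. a i * xs ! i)"
  proof (rule dvd_sum)
    fix i assume "i \<in> I - {j}"
    then have "i \<notin> {i\<in>I. \<not> int p dvd xs ! i}" using j by simp
    then have "int p dvd xs ! i" using \<open>i \<in> I - {j}\<close> by simp
    then show "int p dvd a i * xs ! i" by simp
  qed
  have "int p dvd a j * xs ! j" using S R unfolding Seq by (simp add: dvd_add_right_iff)
  with aj xj ppi show False by (simp add: prime_dvd_mult_iff)
qed

lemma div_other:
  assumes sf: "squarefree m" and p: "p \<in> prime_factors m" and q: "q \<in> prime_factors m" and ne: "p \<noteq> q"
  shows "p dvd m div q"
proof -
  have qm: "q dvd m" using q by (simp add: in_prime_factors_iff)
  have "m = q * (m div q)" using qm by simp
  moreover have "p dvd m" using p by (simp add: in_prime_factors_iff)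
  ultimately have "p dvd q * (m div q)" by metis
  moreover have "\<not> p dvd q" using primes_dvd_imp_eq[OF ppr[OF p] ppr[OF q]] ne by blast
  ultimately show ?thesis using ppr[OF p] by (simp add: prime_dvd_mult_iff)
qed

lemma div_self:
  assumes sf: "squarefree m" and p: "p \<in> prime_factors m"
  shows "\<not> p dvd m div p"
proof
  assume h: "p dvd m div p"
  have pm: "p dvd m" using p by (simp add: in_prime_factors_iff)
  have "p ^ 2 dvd m"
  proof -
    obtain k where "m div p = p * k" using h by blast
    moreover have "m = p * (m div p)" using pm by simp
    ultimately have "m = p ^ 2 * k" by (simp add: power2_eq_square mult.assoc)
    then show ?thesis by simp
  qed
  then have "p dvd 1" using squarefreeD[OF sf] by (meson dvd_trans dvd_power[of 2 p] zero_less_numeral)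
  with ppr[OF p] show False by simp
qed

lemma chain_free:
  assumes sf: "squarefree m" and AU: "A \<subseteq> Uset m" and j: "j \<le> card (prime_factors m)"
  shows "\<exists>xs. length xs = j \<and> is_seq m xs \<and> \<not> has_wzs A m xs"
proof -
  let ?P = "prime_factors m"
  define ps where "ps = sorted_list_of_set ?P"
  have ps: "distinct ps" "set ps = ?P" "length ps = card ?P" unfolding ps_def by auto
  define xs where "xs = map (\<lambda>i. int (m div ps ! i)) [0..<j]"
  have len: "length xs = j" unfolding xs_def by simp
  have m0: "m > 0" using sf_nz[OF sf] by simp
  have psP: "\<And>i. i < j \<Longrightarrow> ps ! i \<in> ?P" using ps j by (metis nth_mem order_less_le_trans)
  have "is_seq m xs" unfolding is_seq_def xs_def
  proof
    fix x assume "x \<in> set (map (\<lambda>i. int (m div ps ! i)) [0..<j])"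
    then obtain i where i: "i < j" "x = int (m div ps ! i)" by auto
    have "ps ! i > 1" by (rule prime_gt_1_nat[OF ppr[OF psP[OF i(1)]]])
    then have "m div ps ! i < m" using m0 by simp
    then show "x \<in> {0..<int m}" using i by simp
  qed
  moreover have "\<not> has_wzs A m xs"
  proof (rule easy_free[OF AU], intro allI impI)
    fix I assume I: "I \<noteq> {} \<and> I \<subseteq> {..<length xs}"
    then obtain i0 where i0: "i0 \<in> I" by blast
    have i0j: "i0 < j" using I i0 len by auto
    have "{i\<in>I. \<not> int (ps ! i0) dvd xs ! i} = {i0}"
    proof (intro equalityI subsetI)
      fix i assume "i \<in> {i\<in>I. \<not> int (ps ! i0) dvd xs ! i}"
      then have iI: "i \<in> I" and nd: "\<not> int (ps ! i0) dvd xs ! i" by auto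
      have ij: "i < j" using I iI len by auto
      show "i \<in> {i0}"
      proof (rule ccontr)
        assume "i \<notin> {i0}"
        then have "ps ! i0 \<noteq> ps ! i" using ps(1) i0j ij ps(3) j by (simp add: nth_eq_iff_index_eq)
        then have "ps ! i0 dvd m div ps ! i" using div_other[OF sf psP[OF i0j] psP[OF ij]] by simp
        then have "int (ps ! i0) dvd xs ! i" using ij by (simp add: xs_def)
        with nd show False by simp
      qed
    next
      fix i assume "i \<in> {i0}"
      then have "i = i0" by simp
      moreover have "\<not> int (ps ! i0) dvd xs ! i0" using div_self[OF sf psP[OF i0j]] i0j by (simp add: xs_def)
      ultimately show "i \<in> {i\<in>I. \<not> int (ps ! i0) dvd xs ! i}" using i0 by simp
    qed
    then show "\<exists>p\<in>?P. card {i\<in>I. \<not> int p dvd xs ! i} = 1" using psP[OF i0j] by (intro bexI[of _ "ps ! i0"]) auto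
  qed
  ultimately show ?thesis using len by blast
qed

lemma parity:
  assumes finP: "finite P" and L: "length xs > card P"
  shows "\<exists>I. I \<noteq> {} \<and> I \<subseteq> {..<length xs} \<and> (\<forall>p\<in>P. even (card {i\<in>I. \<not> int p dvd xs ! i}))"
proof -
  let ?L = "length xs"
  define f where "f I = {p\<in>P. odd (card {i\<in>I. \<not> int p dvd xs ! i})}" for I :: "nat set"
  have img: "f ` Pow {..<?L} \<subseteq> Pow P" unfolding f_def by auto
  have "\<not> inj_on f (Pow {..<?L})"
  proof
    assume inj: "inj_on f (Pow {..<?L})"
    have "card (Pow {..<?L}) = card (f ` Pow {..<?L})" using card_image[OF inj] by simp
    also have "\<dots> \<le> card (Pow P)" using img finP by (intro card_mono) auto
    finally have "(2::nat) ^ ?L \<le> 2 ^ card P" using finP by (simp add: card_Pow)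
    with L show False by simp
  qed
  then obtain I J where IJ: "I \<in> Pow {..<?L}" "J \<in> Pow {..<?L}" "I \<noteq> J" "f I = f J"
    unfolding inj_on_def by blast
  define K where "K = (I - J) \<union> (J - I)"
  have K: "K \<noteq> {}" "K \<subseteq> {..<?L}" using IJ unfolding K_def by auto
  have finI: "finite I" "finite J" using IJ(1,2) finite_subset[of _ "{..<?L}"] by auto
  have "\<forall>p\<in>P. even (card {i\<in>K. \<not> int p dvd xs ! i})"
  proof
    fix p assume pP: "p \<in> P"
    define A where "A = {i\<in>I. \<not> int p dvd xs ! i}"
    define B where "B = {i\<in>J. \<not> int p dvd xs ! i}"
    have fA: "finite A" "finite B" using finI unfolding A_def B_def by auto
    have Kp: "{i\<in>K. \<not> int p dvd xs ! i} = (A - B) \<union> (B - A)" unfolding K_def A_def B_def by auto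
    have c1: "card {i\<in>K. \<not> int p dvd xs ! i} = card (A - B) + card (B - A)"
      unfolding Kp using fA by (intro card_Un_disjoint) auto
    have e2: "A = (A - B) \<union> (A \<inter> B)" and e3: "B = (B - A) \<union> (A \<inter> B)" by auto
    have c2: "card A = card (A - B) + card (A \<inter> B)"
      by (subst e2) (rule card_Un_disjoint, use fA in auto)
    have c3: "card B = card (B - A) + card (A \<inter> B)"
      by (subst e3) (rule card_Un_disjoint, use fA in auto)
    have "p \<in> f I \<longleftrightarrow> p \<in> f J" using IJ(4) by simp
    then have "odd (card A) \<longleftrightarrow> odd (card B)" using pP unfolding f_def A_def B_def by simp
    then show "even (card {i\<in>K. \<not> int p dvd xs ! i})" unfolding c1 using c2 c3 by presburger
  qed
  then show ?thesis using K by blast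
qed


lemma one_U: "m > 1 \<Longrightarrow> 1 \<in> Uset m" by (simp add: Uset_def)

lemma one_S: assumes sf: "squarefree m" and m1: "m > 1" shows "1 \<in> Sset m"
proof -
  have "Jacobi 1 m = 1" unfolding jac_sf[OF sf]
  proof (rule prod.neutral, rule ballI)
    fix p assume "p \<in> prime_factors m"
    then have "int p > 1" using prime_gt_1_nat[OF ppr] by simp
    then show "Legendre 1 (int p) = 1" by (rule leg_one)
  qed
  then show ?thesis using one_U[OF m1] by (simp add: Sset_def)
qed

lemma zero_wzs: assumes "1 \<in> A" "l < length xs" "xs ! l mod int m = 0" shows "has_wzs A m xs"
  unfolding has_wzs_def using assms by (intro exI[of _ "{l}"] exI[of _ "\<lambda>_. 1"]) auto

lemma nz_has_p: assumes sf: "squarefree m" and x: "0 \<le> x" "x < int m" "x \<noteq> 0"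
  shows "\<exists>p\<in>prime_factors m. \<not> int p dvd x"
proof (rule ccontr)
  assume "\<not> (\<exists>p\<in>prime_factors m. \<not> int p dvd x)"
  then have "int m dvd x" using dvd_sf_int[OF sf] by blast
  then obtain k where k: "x = int m * k" by blast
  have "k \<ge> 1" using x k by (smt (verit) mult_nonneg_nonpos of_nat_0_le_iff mult_eq_0_iff)
  then have "x \<ge> int m" using k by (smt (verit) mult_le_cancel_left1 of_nat_0_le_iff)
  with x show False by simp
qed

lemma mono_wzs: assumes AB: "A \<subseteq> B" and h: "has_wzs A m xs" shows "has_wzs B m xs"
proof -
  obtain I a where Ia: "I \<noteq> {}" "I \<subseteq> {..<length xs}" "\<forall>i\<in>I. a i \<in> A"
      "(\<Sum>i\<in>I. a i * xs ! i) mod int m = 0" using h unfolding has_wzs_def by (elim exE conjE)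
  have "\<forall>i\<in>I. a i \<in> B" using Ia(3) AB by blast
  then show ?thesis unfolding has_wzs_def using Ia(1,2,4) by (intro exI[of _ I] exI[of _ a] conjI)
qed

lemma Sset_sub: "Sset m \<subseteq> Uset m" by (auto simp: Sset_def)

lemma seq_nth: "is_seq m xs \<Longrightarrow> l < length xs \<Longrightarrow> 0 \<le> xs ! l \<and> xs ! l < int m"
  unfolding is_seq_def using nth_mem by fastforce

lemma two_units:
  assumes sf: "squarefree m" and P7: "\<forall>p\<in>prime_factors m. 7 \<le> p" and m1: "m > 1"
    and sq: "is_seq m xs" and L: "3 \<le> length xs" and ij: "i < length xs" "j < length xs" "i \<noteq> j"
    and u: "isunit m (xs ! i)" "isunit m (xs ! j)"
  shows "has_wzs (Sset m) m xs"
proof -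
  have "\<exists>l<3. l \<noteq> i \<and> l \<noteq> j" by presburger
  then obtain l where l0: "l < 3" "l \<noteq> i" "l \<noteq> j" by blast
  then have l: "l < length xs" "l \<noteq> i" "l \<noteq> j" using L by simp_all
  show ?thesis
  proof (cases "xs ! l = 0")
    case True
    then show ?thesis using zero_wzs[OF one_S[OF sf m1] l(1)] by simp
  next
    case False
    obtain q where q: "q \<in> prime_factors m" "\<not> int q dvd xs ! l"
      using nz_has_p[OF sf _ _ False] seq_nth[OF sq l(1)] by blast
    let ?I = "{..<length xs}"
    show ?thesis
    proof (rule G[OF sf P7, of ?I])
      have "0 < length xs" using L by linarith
      then have "0 \<in> ?I" by simp
      then show "?I \<noteq> {}" by blast
      show "?I \<subseteq> {..<length xs}" by simp
      show "\<forall>p\<in>prime_factors m. card {i\<in>?I. \<not> int p dvd xs ! i} \<noteq> 1"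
      proof
        fix p assume pP: "p \<in> prime_factors m"
        have "{i, j} \<subseteq> {i\<in>?I. \<not> int p dvd xs ! i}" using ij u pP by (auto simp: isunit_def)
        then have "card {i, j} \<le> card {i\<in>?I. \<not> int p dvd xs ! i}" by (intro card_mono) auto
        then show "card {i\<in>?I. \<not> int p dvd xs ! i} \<noteq> 1" using ij(3) by simp
      qed
      have "{i, j, l} \<subseteq> {i\<in>?I. \<not> int q dvd xs ! i}" using ij u q l by (auto simp: isunit_def)
      then have "card {i, j, l} \<le> card {i\<in>?I. \<not> int q dvd xs ! i}" by (intro card_mono) auto
      then have "3 \<le> card {i\<in>?I. \<not> int q dvd xs ! i}" using ij(3) l by simp
      then show "(\<exists>p0\<in>prime_factors m. 3 \<le> card {i\<in>?I. \<not> int p0 dvd xs ! i})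
           \<or> (\<forall>i\<in>?I. \<forall>j\<in>?I. isunit m (xs ! i) \<longrightarrow> isunit m (xs ! j) \<longrightarrow> i = j)"
        using q(1) by blast
    qed
  qed
qed

lemma card_m1: assumes "squarefree (m::nat)" "1 \<le> card (prime_factors m)" shows "m > 1"
proof -
  have "m \<noteq> 0" using assms(1) by (rule sf_nz)
  moreover have "m \<noteq> 1" using assms(2) by auto
  ultimately show ?thesis by simp
qed

lemma upper_S:
  assumes sf: "squarefree m" and P7: "\<forall>p\<in>prime_factors m. 7 \<le> p" and c2: "2 \<le> card (prime_factors m)"
    and sq: "is_seq m xs" and L: "length xs = card (prime_factors m) + 1"
  shows "has_wzs (Sset m) m xs"
proof -
  have m1: "m > 1" using card_m1[OF sf] c2 by simp
  show ?thesis
  proof (cases "\<exists>i j. i < length xs \<and> j < length xs \<and> i \<noteq> j \<and> isunit m (xs ! i) \<and> isunit m (xs ! j)")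
    case True
    then obtain i j where "i < length xs" "j < length xs" "i \<noteq> j" "isunit m (xs ! i)" "isunit m (xs ! j)" by blast
    then show ?thesis using two_units[OF sf P7 m1 sq] L c2 by simp
  next
    case False
    obtain I where I: "I \<noteq> {}" "I \<subseteq> {..<length xs}" "\<forall>p\<in>prime_factors m. even (card {i\<in>I. \<not> int p dvd xs ! i})"
      using parity[of "prime_factors m" xs] L by auto
    show ?thesis
    proof (rule G[OF sf P7 I(1,2)])
      show "\<forall>p\<in>prime_factors m. card {i\<in>I. \<not> int p dvd xs ! i} \<noteq> 1" using I(3) by fastforce
      show "(\<exists>p0\<in>prime_factors m. 3 \<le> card {i\<in>I. \<not> int p0 dvd xs ! i})
           \<or> (\<forall>i\<in>I. \<forall>j\<in>I. isunit m (xs ! i) \<longrightarrow> isunit m (xs ! j) \<longrightarrow> i = j)"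
        using False I(2) by blast
    qed
  qed
qed

lemma upper_U:
  assumes sf: "squarefree m" and P7: "\<forall>p\<in>prime_factors m. 7 \<le> p" and c1: "1 \<le> card (prime_factors m)"
    and sq: "is_seq m xs" and L: "length xs = card (prime_factors m) + 1"
  shows "has_wzs (Uset m) m xs"
proof (cases "2 \<le> card (prime_factors m)")
  case True
  then show ?thesis using mono_wzs[OF Sset_sub upper_S[OF sf P7 True sq L]] by simp
next
  case False
  then have cP: "card (prime_factors m) = 1" using c1 by simp
  have m1: "m > 1" using card_m1[OF sf] c1 by simp
  have L2: "length xs = 2" using L cP by simp
  show ?thesis
  proof (cases "xs ! 0 = 0 \<or> xs ! 1 = 0")
    case True
    then show ?thesis using zero_wzs[OF one_U[OF m1], of 0 xs m] zero_wzs[OF one_U[OF m1], of 1 xs m] L2 by auto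
  next
    case False
    obtain q where Pq: "prime_factors m = {q}" using card_1_singletonE[OF cP] by blast
    have x0: "0 \<le> xs ! 0" "xs ! 0 < int m" and x1: "0 \<le> xs ! 1" "xs ! 1 < int m"
      using seq_nth[OF sq] L2 by auto
    have q0: "\<not> int q dvd xs ! 0" using nz_has_p[OF sf x0] False Pq by auto
    have q1: "\<not> int q dvd xs ! 1" using nz_has_p[OF sf x1] False Pq by auto
    have "q \<in> prime_factors m" using Pq by simp
    then have "q dvd m" by (simp add: in_prime_factors_iff)
    then have qm: "int q dvd int m" by simp
    define a where "a = (\<lambda>k::nat. if k = 0 then xs ! 1 else int m - xs ! 0)"
    have m0: "m \<noteq> 0" using m1 by simp
    have "coprime (xs ! 1) (int m)" using cop_sf[OF m0, of "xs ! 1"] q1 Pq by simp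
    then have a0: "a 0 \<in> Uset m" using x1 by (simp add: Uset_def a_def)
    have nd: "\<not> int q dvd int m - xs ! 0"
    proof
      assume h: "int q dvd int m - xs ! 0"
      have "int q dvd int m - (int m - xs ! 0)" using dvd_diff[OF qm h] .
      with q0 show False by simp
    qed
    have "coprime (int m - xs ! 0) (int m)" using cop_sf[OF m0, of "int m - xs ! 0"] nd Pq by simp
    moreover have "xs ! 0 \<noteq> 0" using False by simp
    ultimately have a1: "a 1 \<in> Uset m" using x0 by (simp add: Uset_def a_def)
    have "(\<Sum>i\<in>{0,1}. a i * xs ! i) = int m * xs ! 1" by (simp add: a_def algebra_simps)
    then have "(\<Sum>i\<in>{0,1}. a i * xs ! i) mod int m = 0" by simp
    moreover have "\<forall>i\<in>{0::nat,1}. a i \<in> Uset m" using a0 a1 by simp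
    ultimately show ?thesis unfolding has_wzs_def using L2
      by (intro exI[of _ "{0::nat,1}"] exI[of _ a]) auto
  qed
qed

lemma dav_gen:
  assumes up: "\<forall>xs. length xs = k + 1 \<and> is_seq m xs \<longrightarrow> has_wzs A m xs"
    and low: "\<forall>j\<le>k. \<exists>xs. length xs = j \<and> is_seq m xs \<and> \<not> has_wzs A m xs"
  shows "davenport A m = k + 1"
  unfolding davenport_def
proof (rule Least_equality)
  show "\<forall>xs. length xs = k + 1 \<and> is_seq m xs \<longrightarrow> has_wzs A m xs" by (rule up)
  fix y assume y: "\<forall>xs. length xs = y \<and> is_seq m xs \<longrightarrow> has_wzs A m xs"
  show "k + 1 \<le> y"
  proof (rule ccontr)
    assume "\<not> k + 1 \<le> y"
    then have "y \<le> k" by simp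
    then obtain xs where "length xs = y" "is_seq m xs" "\<not> has_wzs A m xs" using low by blast
    with y show False by blast
  qed
qed

lemma dav_S:
  assumes sf: "squarefree m" and P7: "\<forall>p\<in>prime_factors m. 7 \<le> p" and c2: "2 \<le> card (prime_factors m)"
  shows "davenport (Sset m) m = card (prime_factors m) + 1"
  by (rule dav_gen) (use upper_S[OF sf P7 c2] chain_free[OF sf Sset_sub] in auto)

lemma dav_U:
  assumes sf: "squarefree m" and P7: "\<forall>p\<in>prime_factors m. 7 \<le> p" and c1: "1 \<le> card (prime_factors m)"
  shows "davenport (Uset m) m = card (prime_factors m) + 1"
  by (rule dav_gen) (use upper_U[OF sf P7 c1] chain_free[OF sf order_refl] in auto)

lemma omega_sf: assumes sf: "squarefree n" shows "Omega n = card (prime_factors n)"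
proof -
  have n0: "n \<noteq> 0" using sf by (rule sf_nz)
  have "prime_factorization n = mset_set (prime_factors n)"
  proof (rule multiset_eqI)
    fix p
    show "count (prime_factorization n) p = count (mset_set (prime_factors n)) p"
    proof (cases "p \<in> prime_factors n")
      case True
      then show ?thesis using sf_mult1[OF sf True] ppr[OF True] by (simp add: count_prime_factorization)
    next
      case False
      then show ?thesis by (simp add: count_eq_zero_iff)
    qed
  qed
  then have "size (prime_factorization n) = size (mset_set (prime_factors n))" by (rule arg_cong)
  also have "\<dots> = card (prime_factors n)" by simp
  finally show ?thesis unfolding Omega_def .
qed


lemma easy_core:
  assumes AU: "A \<subseteq> Uset m" and h: "has_wzs A m xs"
  shows "\<exists>I. I \<noteq> {} \<and> I \<subseteq> {..<length xs} \<and> (\<forall>p\<in>prime_factors m. card {i\<in>I. \<not> int p dvd xs ! i} \<noteq> 1)"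
proof (rule ccontr)
  assume a: "\<not> ?thesis"
  have "\<forall>I. I \<noteq> {} \<and> I \<subseteq> {..<length xs} \<longrightarrow> (\<exists>p\<in>prime_factors m. card {i\<in>I. \<not> int p dvd xs ! i} = 1)"
  proof (intro allI impI)
    fix I assume "I \<noteq> {} \<and> I \<subseteq> {..<length xs}"
    then show "\<exists>p\<in>prime_factors m. card {i\<in>I. \<not> int p dvd xs ! i} = 1" using a by blast
  qed
  with easy_free[OF AU] h show False by blast
qed

lemma pf_div:
  assumes sf: "squarefree (n::nat)" and pP: "p \<in> prime_factors n"
  shows "prime_factors (n div p) = prime_factors n - {p}"
proof -
  have n0: "n \<noteq> 0" using sf by (rule sf_nz)
  have pn: "p dvd n" using pP by (simp add: in_prime_factors_iff)
  have pp1: "p > 1" using prime_gt_1_nat[OF ppr[OF pP]] .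
  have np: "n = p * (n div p)" using pn by simp
  have d0: "n div p \<noteq> 0" using n0 np by (metis mult_0_right)
  show ?thesis
  proof (intro equalityI subsetI)
    fix q assume q: "q \<in> prime_factors (n div p)"
    have qd: "q dvd n div p" and qp: "prime q" using q by (auto simp: in_prime_factors_iff)
    have "n div p dvd n" using np by (metis dvd_triv_right)
    then have "q dvd n" using qd by (rule dvd_trans[rotated])
    then have qP: "q \<in> prime_factors n" using qp n0 by (simp add: in_prime_factors_iff)
    have "q \<noteq> p" using div_self[OF sf pP] qd by blast
    then show "q \<in> prime_factors n - {p}" using qP by simp
  next
    fix q assume q: "q \<in> prime_factors n - {p}"
    then have "q dvd n div p" using div_other[OF sf _ pP] by blast
    then show "q \<in> prime_factors (n div p)" using q d0 by (auto simp: in_prime_factors_iff)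
  qed
qed

lemma sf_div: assumes sf: "squarefree (n::nat)" and pn: "p dvd n" shows "squarefree (n div p)"
proof -
  have "n = (n div p) * p" using pn by simp
  then have "n div p dvd n" by (metis dvd_triv_left)
  then show ?thesis using sf by (rule squarefree_mono)
qed

lemma step:
  fixes n :: nat and xs :: "int list"
  assumes sf: "squarefree n" and P7: "\<forall>p\<in>prime_factors n. 7 \<le> p" and c2: "2 \<le> card (prime_factors n)"
    and sq: "is_seq n xs" and L: "length xs = card (prime_factors n)"
    and nz: "\<not> has_wzs (Sset n) n xs"
    and nu: "\<forall>i<length xs. \<forall>j<length xs. isunit n (xs ! i) \<longrightarrow> isunit n (xs ! j) \<longrightarrow> i = j"
  shows "\<exists>ys p. seq_equiv (Sset n) n xs ys \<and> prime p \<and> p dvd n \<and> \<not> int p dvd ys ! 0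
     \<and> (\<forall>i\<in>{1..<length ys}. int p dvd ys ! i) \<and> length ys = length xs
     \<and> \<not> has_wzs (Uset (n div p)) (n div p) (map (\<lambda>y. y mod int (n div p)) (tl ys))"
proof -
  let ?P = "prime_factors n"
  let ?L = "length xs"
  let ?I = "{..<?L}"
  have n1: "n > 1" using card_m1[OF sf] c2 by simp
  have Lpos: "0 < ?L" using L c2 by simp
  have I0: "?I \<noteq> {}" using Lpos by (metis lessThan_iff empty_iff)
  have "\<exists>p\<in>?P. card {i\<in>?I. \<not> int p dvd xs ! i} = 1"
  proof (rule ccontr)
    assume "\<not> (\<exists>p\<in>?P. card {i\<in>?I. \<not> int p dvd xs ! i} = 1)"
    then have C1: "\<forall>p\<in>?P. card {i\<in>?I. \<not> int p dvd xs ! i} \<noteq> 1" by blast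
    have "has_wzs (Sset n) n xs"
    proof (rule G[OF sf P7 I0 _ C1])
      show "?I \<subseteq> {..<?L}" by simp
      show "(\<exists>p0\<in>?P. 3 \<le> card {i\<in>?I. \<not> int p0 dvd xs ! i})
           \<or> (\<forall>i\<in>?I. \<forall>j\<in>?I. isunit n (xs ! i) \<longrightarrow> isunit n (xs ! j) \<longrightarrow> i = j)"
        using nu by simp
    qed
    with nz show False by simp
  qed
  then obtain p where pP: "p \<in> ?P" and c1: "card {i\<in>?I. \<not> int p dvd xs ! i} = 1" by blast
  obtain i0 where i0: "{i\<in>?I. \<not> int p dvd xs ! i} = {i0}" using card_1_singletonE[OF c1] by blast
  have "i0 \<in> {i\<in>?I. \<not> int p dvd xs ! i}" using i0 by simp
  then have i0L: "i0 < ?L" and pi0: "\<not> int p dvd xs ! i0" by simp_all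
  have pdiv: "\<And>i. i < ?L \<Longrightarrow> i \<noteq> i0 \<Longrightarrow> int p dvd xs ! i"
  proof -
    fix i assume "i < ?L" "i \<noteq> i0"
    then have "i \<notin> {i\<in>?I. \<not> int p dvd xs ! i}" using i0 by simp
    then show "int p dvd xs ! i" using \<open>i < ?L\<close> by simp
  qed
  define \<sigma> where "\<sigma> = (\<lambda>i::nat. if i = 0 then i0 else if i = i0 then 0 else i)"
  have ss: "\<And>i. \<sigma> (\<sigma> i) = i" by (auto simp: \<sigma>_def)
  have sL: "\<And>i. i < ?L \<Longrightarrow> \<sigma> i < ?L" using i0L Lpos by (auto simp: \<sigma>_def)
  have s0: "\<And>i. \<sigma> i = i0 \<longleftrightarrow> i = 0" by (auto simp: \<sigma>_def)
  have injs: "inj \<sigma>" by (metis ss injI)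
  define ys where "ys = map (\<lambda>j. xs ! \<sigma> j) [0..<?L]"
  have lys: "length ys = ?L" unfolding ys_def by simp
  have ysn: "\<And>j. j < ?L \<Longrightarrow> ys ! j = xs ! \<sigma> j" unfolding ys_def by simp
  have seqy: "is_seq n ys" unfolding is_seq_def
  proof
    fix y assume "y \<in> set ys"
    then obtain j where j: "j < ?L" "y = ys ! j" using lys by (metis in_set_conv_nth)
    then have "y = xs ! \<sigma> j" using ysn by simp
    then show "y \<in> {0..<int n}" using seq_nth[OF sq sL[OF j(1)]] by simp
  qed
  have one: "1 \<in> Sset n" using one_S[OF sf n1] .
  have eqv: "seq_equiv (Sset n) n xs ys"
    unfolding seq_equiv_def
  proof (intro conjI)
    show "is_seq n xs" "is_seq n ys" "?L = length ys" using sq seqy lys by simp_all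
    have bij: "bij_betw \<sigma> ?I ?I"
      by (rule bij_betw_byWitness[where f' = \<sigma>]) (use ss sL in auto)
    have "\<forall>i<?L. ys ! (\<sigma> i) = (1 * 1 * xs ! i) mod int n"
    proof (intro allI impI)
      fix i assume i: "i < ?L"
      have "ys ! (\<sigma> i) = xs ! i" using ysn[OF sL[OF i]] ss by simp
      moreover have "xs ! i mod int n = xs ! i" using seq_nth[OF sq i] by simp
      ultimately show "ys ! (\<sigma> i) = (1 * 1 * xs ! i) mod int n" by simp
    qed
    moreover have "(1::int) \<in> Uset n" using one_U[OF n1] .
    ultimately show "\<exists>a c \<sigma>. (\<forall>i<?L. a i \<in> Sset n) \<and> c \<in> Uset n \<and>
        bij_betw \<sigma> {..<?L} {..<?L} \<and> (\<forall>i<?L. ys ! (\<sigma> i) = (c * a i * xs ! i) mod int n)"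
      using one bij by (intro exI[of _ "\<lambda>_. 1"] exI[of _ 1] exI[of _ \<sigma>]) auto
  qed
  have y0: "\<not> int p dvd ys ! 0" using ysn[OF Lpos] pi0 by (simp add: \<sigma>_def)
  have yi: "\<forall>i\<in>{1..<length ys}. int p dvd ys ! i"
  proof
    fix i assume "i \<in> {1..<length ys}"
    then have i: "i < ?L" "i \<noteq> 0" using lys by auto
    have "\<sigma> i \<noteq> i0" using s0 i(2) by simp
    then show "int p dvd ys ! i" using ysn[OF i(1)] pdiv[OF sL[OF i(1)]] by simp
  qed
  have pp: "prime p" using ppr[OF pP] .
  have pn: "p dvd n" using pP by (simp add: in_prime_factors_iff)
  define n' where "n' = n div p"
  define T where "T = map (\<lambda>y. y mod int n') (tl ys)"
  have Pn': "prime_factors n' = ?P - {p}" unfolding n'_def by (rule pf_div[OF sf pP])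
  have lT: "length T = ?L - 1" unfolding T_def using lys by simp
  have Tj: "\<And>j. j < length T \<Longrightarrow> T ! j = xs ! \<sigma> (Suc j) mod int n'"
  proof -
    fix j assume j: "j < length T"
    then have "j < length (tl ys)" unfolding T_def by simp
    then have "tl ys ! j = ys ! Suc j" by (rule nth_tl)
    moreover have "Suc j < ?L" using j lT by simp
    ultimately show "T ! j = xs ! \<sigma> (Suc j) mod int n'" using ysn j unfolding T_def by simp
  qed
  have "\<not> has_wzs (Uset n') n' T"
  proof
    assume h: "has_wzs (Uset n') n' T"
    obtain J where J: "J \<noteq> {}" "J \<subseteq> {..<length T}"
        "\<forall>q\<in>prime_factors n'. card {j\<in>J. \<not> int q dvd T ! j} \<noteq> 1"
      using easy_core[OF order_refl h] by blast
    define K where "K = (\<sigma> \<circ> Suc) ` J"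
    have KI: "K \<subseteq> ?I" unfolding K_def using J(2) lT sL by auto
    have K0: "K \<noteq> {}" unfolding K_def using J(1) by simp
    have Kp: "\<And>i. i \<in> K \<Longrightarrow> int p dvd xs ! i"
    proof -
      fix i assume "i \<in> K"
      then obtain j where j: "j \<in> J" "i = \<sigma> (Suc j)" unfolding K_def by auto
      have "i \<noteq> i0" using s0 j(2) by simp
      moreover have "i < ?L" using KI \<open>i \<in> K\<close> by auto
      ultimately show "int p dvd xs ! i" using pdiv by simp
    qed
    have injS: "inj (\<sigma> \<circ> Suc)" using injs by (simp add: inj_compose)
    have cardeq: "\<And>q. q \<in> prime_factors n' \<Longrightarrow>
        card {i\<in>K. \<not> int q dvd xs ! i} = card {j\<in>J. \<not> int q dvd T ! j}"
    proof -
      fix q assume q: "q \<in> prime_factors n'"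
      have qn': "int q dvd int n'" using q by (simp add: in_prime_factors_iff)
      have eqJ: "{j\<in>J. \<not> int q dvd T ! j} = {j\<in>J. \<not> int q dvd xs ! \<sigma> (Suc j)}"
      proof (intro Collect_cong conj_cong refl)
        fix j assume "j \<in> J"
        then have "j < length T" using J(2) by auto
        then show "(\<not> int q dvd T ! j) = (\<not> int q dvd xs ! \<sigma> (Suc j))"
          using Tj dvd_mod_iff[OF qn'] by simp
      qed
      have "{i\<in>K. \<not> int q dvd xs ! i} = (\<sigma> \<circ> Suc) ` {j\<in>J. \<not> int q dvd xs ! \<sigma> (Suc j)}"
        unfolding K_def by auto
      then have "card {i\<in>K. \<not> int q dvd xs ! i} = card {j\<in>J. \<not> int q dvd xs ! \<sigma> (Suc j)}"
        using card_image[OF inj_on_subset[OF injS subset_UNIV]] by simp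
      then show "card {i\<in>K. \<not> int q dvd xs ! i} = card {j\<in>J. \<not> int q dvd T ! j}" using eqJ by simp
    qed
    have "has_wzs (Sset n) n xs"
    proof (rule G[OF sf P7 K0 KI])
      show "\<forall>q\<in>?P. card {i\<in>K. \<not> int q dvd xs ! i} \<noteq> 1"
      proof
        fix q assume qP: "q \<in> ?P"
        show "card {i\<in>K. \<not> int q dvd xs ! i} \<noteq> 1"
        proof (cases "q = p")
          case True
          then have e: "{i\<in>K. \<not> int q dvd xs ! i} = {}" using Kp by blast
          show ?thesis unfolding e by simp
        next
          case False
          then have "q \<in> prime_factors n'" using Pn' qP by simp
          then show ?thesis using cardeq J(3) by simp
        qed
      qed
      have "\<forall>i\<in>K. \<not> isunit n (xs ! i)" using Kp pP by (auto simp: isunit_def)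
      then show "(\<exists>p0\<in>?P. 3 \<le> card {i\<in>K. \<not> int p0 dvd xs ! i})
           \<or> (\<forall>i\<in>K. \<forall>j\<in>K. isunit n (xs ! i) \<longrightarrow> isunit n (xs ! j) \<longrightarrow> i = j)" by blast
    qed
    with nz show False by simp
  qed
  then have "\<not> has_wzs (Uset (n div p)) (n div p) (map (\<lambda>y. y mod int (n div p)) (tl ys))"
    unfolding T_def n'_def .
  then show ?thesis using eqv pp pn y0 yi lys by blast
qed


lemma unit_not_dvd: assumes "coprime c (int n)" "p \<in> prime_factors n" shows "\<not> int p dvd c"
proof
  assume h: "int p dvd c"
  have "int p dvd int n" using assms(2) by (simp add: in_prime_factors_iff)
  then have "is_unit (int p)" using assms(1) h by (meson coprime_common_divisor)
  with ppr[OF assms(2)] show False by simp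
qed

lemma both_units:
  assumes sf: "squarefree n" and n1: "n > 1" and sq: "is_seq n xs" and L: "length xs = 2"
    and nz: "\<not> has_wzs (Sset n) n xs" and u0: "isunit n (xs ! 0)" and u1: "isunit n (xs ! 1)"
  shows "\<exists>ys. seq_equiv (Sset n) n xs ys \<and> ys ! 0 \<in> Sset n \<and> (- (ys ! 1)) mod int n \<in> Uset n - Sset n"
proof -
  have n0: "n \<noteq> 0" using n1 by simp
  have cop0: "coprime (xs ! 0) (int n)" using cop_sf[OF n0] u0 by (simp add: isunit_def)
  obtain c0 where c0: "[xs ! 0 * c0 = 1] (mod int n)" using cong_solve_coprime_int[OF cop0] by blast
  define c where "c = c0 mod int n"
  have cx: "[xs ! 0 * c = 1] (mod int n)" using c0 unfolding c_def cong_def by (simp add: mod_mult_right_eq)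
  have cxd: "int n dvd xs ! 0 * c - 1" using cx by (simp add: cong_iff_dvd_diff)
  have cnd: "\<forall>p\<in>prime_factors n. \<not> int p dvd c"
  proof
    fix p assume pP: "p \<in> prime_factors n"
    show "\<not> int p dvd c"
    proof
      assume h: "int p dvd c"
      have "int p dvd int n" using pP by (simp add: in_prime_factors_iff)
      then have d1: "int p dvd xs ! 0 * c - 1" using cxd by (rule dvd_trans)
      have d2: "int p dvd xs ! 0 * c" using h by simp
      have "int p dvd xs ! 0 * c - (xs ! 0 * c - 1)" using dvd_diff[OF d2 d1] .
      then have "int p dvd 1" by simp
      with ppr[OF pP] show False by simp
    qed
  qed
  have cU: "c \<in> Uset n" using cop_sf[OF n0 cnd] n1 unfolding Uset_def c_def by simp
  have cop: "coprime c (int n)" using cU by (simp add: Uset_def)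
  define ys where "ys = [1, (c * xs ! 1) mod int n]"
  have one: "1 \<in> Sset n" using one_S[OF sf n1] .
  have eqv: "seq_equiv (Sset n) n xs ys"
    unfolding seq_equiv_def
  proof (intro conjI)
    show "is_seq n xs" by (rule sq)
    show "is_seq n ys" unfolding is_seq_def ys_def using n1 by auto
    show "length xs = length ys" using L by (simp add: ys_def)
    have "\<forall>i<length xs. ys ! (id i) = (c * 1 * xs ! i) mod int n"
    proof (intro allI impI)
      fix i assume "i < length xs"
      then have "i = 0 \<or> i = 1" using L by auto
      moreover have "(c * xs ! 0) mod int n = 1"
        using cx n1 unfolding cong_def by (simp add: mult.commute)
      ultimately show "ys ! (id i) = (c * 1 * xs ! i) mod int n" by (auto simp: ys_def)
    qed
    moreover have "bij_betw id {..<length xs} {..<length xs}" by simp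
    ultimately show "\<exists>a c \<sigma>. (\<forall>i<length xs. a i \<in> Sset n) \<and> c \<in> Uset n \<and>
        bij_betw \<sigma> {..<length xs} {..<length xs} \<and> (\<forall>i<length xs. ys ! (\<sigma> i) = (c * a i * xs ! i) mod int n)"
      using one cU by (intro exI[of _ "\<lambda>_. 1"] exI[of _ c] exI[of _ id]) auto
  qed
  define z where "z = (- (ys ! 1)) mod int n"
  have zc: "[z = - (c * xs ! 1)] (mod int n)" unfolding z_def ys_def cong_def by (simp add: mod_minus_eq)
  have zd: "int n dvd z + c * xs ! 1" using zc by (simp add: cong_iff_dvd_diff)
  have zU: "z \<in> Uset n"
  proof -
    have "\<forall>p\<in>prime_factors n. \<not> int p dvd z"
    proof
      fix p assume pP: "p \<in> prime_factors n"
      show "\<not> int p dvd z"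
      proof
        assume h: "int p dvd z"
        have "int p dvd int n" using pP by (simp add: in_prime_factors_iff)
        then have "int p dvd z + c * xs ! 1" using zd by (rule dvd_trans)
        then have "int p dvd c * xs ! 1" using h by (simp add: dvd_add_right_iff)
        moreover have "\<not> int p dvd xs ! 1" using u1 pP by (simp add: isunit_def)
        moreover have "\<not> int p dvd c" using cnd pP by simp
        moreover have "prime (int p)" using ppr[OF pP] by simp
        ultimately show False by (simp add: prime_dvd_mult_iff)
      qed
    qed
    then have "coprime z (int n)" by (rule cop_sf[OF n0])
    then show ?thesis unfolding Uset_def z_def using n1 by simp
  qed
  have zS: "z \<notin> Sset n"
  proof
    assume zS: "z \<in> Sset n"
    define a where "a = (\<lambda>k::nat. if k = 0 then z else 1)"
    have "(\<Sum>i\<in>{0::nat,1}. a i * xs ! i) = (z + c * xs ! 1) * xs ! 0 - xs ! 1 * (xs ! 0 * c - 1)"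
      by (simp add: a_def algebra_simps)
    moreover have "int n dvd (z + c * xs ! 1) * xs ! 0 - xs ! 1 * (xs ! 0 * c - 1)"
      by (rule dvd_diff[OF dvd_mult2[OF zd, of "xs ! 0"] dvd_mult[OF cxd, of "xs ! 1"]])
    ultimately have "(\<Sum>i\<in>{0::nat,1}. a i * xs ! i) mod int n = 0" by simp
    moreover have "\<forall>i\<in>{0::nat,1}. a i \<in> Sset n" using zS one by (simp add: a_def)
    ultimately have "has_wzs (Sset n) n xs" unfolding has_wzs_def using L
      by (intro exI[of _ "{0::nat,1}"] exI[of _ a]) auto
    with nz show False by simp
  qed
  show ?thesis using eqv one zU zS unfolding z_def by (intro exI[of _ ys]) (simp add: ys_def)
qed


lemma tl2: assumes "length ys = 2" shows "map f (tl ys) = [f (ys ! 1)]"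
proof -
  have "tl ys = [ys ! 1]"
    by (rule nth_equalityI) (use assms in \<open>auto simp: nth_tl\<close>)
  then show ?thesis by simp
qed

lemma T_extremal:
  assumes sf: "squarefree n" and P7: "\<forall>p\<in>prime_factors n. 7 \<le> p" and c2: "2 \<le> card (prime_factors n)"
    and pp: "prime p" and pn: "p dvd n" and lys: "length ys = card (prime_factors n)"
    and nz: "\<not> has_wzs (Uset (n div p)) (n div p) (map (\<lambda>y. y mod int (n div p)) (tl ys))"
  shows "extremal (Uset (n div p)) (n div p) (map (\<lambda>y. y mod int (n div p)) (tl ys))"
proof -
  have n0: "n \<noteq> 0" using sf by (rule sf_nz)
  have pP: "p \<in> prime_factors n" using pp pn n0 by (simp add: in_prime_factors_iff)
  have Pn': "prime_factors (n div p) = prime_factors n - {p}" by (rule pf_div[OF sf pP])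
  have sf': "squarefree (n div p)" by (rule sf_div[OF sf pn])
  have P7': "\<forall>q\<in>prime_factors (n div p). 7 \<le> q" using P7 Pn' by simp
  have cP: "card (prime_factors (n div p)) = card (prime_factors n) - 1" using Pn' pP by simp
  have c1: "1 \<le> card (prime_factors (n div p))" using cP c2 by simp
  have dv: "davenport (Uset (n div p)) (n div p) = card (prime_factors n)"
    using dav_U[OF sf' P7' c1] cP c2 by simp
  have n'0: "n div p \<noteq> 0" using sf' by (rule sf_nz)
  have "is_seq (n div p) (map (\<lambda>y. y mod int (n div p)) (tl ys))" unfolding is_seq_def using n'0 by auto
  then show ?thesis unfolding extremal_def using dv lys nz by simp
qed

theorem theorem2p12:
  fixes n :: nat and xs :: "int list"
  assumes "odd n" and "squarefree n"
    and "\<forall>p. prime p \<and> p dvd n \<longrightarrow> p \<ge> 7"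
    and "extremal (Sset n) n xs"
  shows "(Omega n \<ge> 3 \<longrightarrow>
           (\<exists>ys p. seq_equiv (Sset n) n xs ys \<and> prime p \<and> p dvd n \<and>
              \<not> int p dvd ys ! 0 \<and> (\<forall>i\<in>{1..<length ys}. int p dvd ys ! i) \<and>
              extremal (Uset (n div p)) (n div p) (map (\<lambda>y. y mod int (n div p)) (tl ys))))
       \<and> (Omega n = 2 \<longrightarrow> length xs = 2 \<and>
           ((\<exists>ys p. seq_equiv (Sset n) n xs ys \<and> prime p \<and> p dvd n \<and>
              \<not> int p dvd ys ! 0 \<and> int p dvd ys ! 1 \<and>
              extremal (Uset (n div p)) (n div p) [ys ! 1 mod int (n div p)])
            \<or> (\<exists>ys. seq_equiv (Sset n) n xs ys \<and> ys ! 0 \<in> Sset n \<and>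
                 (- (ys ! 1)) mod int n \<in> Uset n - Sset n)))"
proof -
  have sf: "squarefree n" by fact
  have P7: "\<forall>p\<in>prime_factors n. 7 \<le> p" using assms(3) by (auto simp: in_prime_factors_iff)
  have sq: "is_seq n xs" and Ld: "length xs = davenport (Sset n) n - 1" and nz: "\<not> has_wzs (Sset n) n xs"
    using assms(4) by (simp_all add: extremal_def)
  have om: "Omega n = card (prime_factors n)" by (rule omega_sf[OF sf])
  have L: "length xs = card (prime_factors n)" if "2 \<le> Omega n"
    using Ld dav_S[OF sf P7] that om by simp
  show ?thesis
  proof (intro conjI impI)
    assume o3: "3 \<le> Omega n"
    have c2: "2 \<le> card (prime_factors n)" using o3 om by simp
    have L3: "length xs = card (prime_factors n)" using L o3 by simp
    have n1: "n > 1" using card_m1[OF sf] c2 by simp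
    have nu: "\<forall>i<length xs. \<forall>j<length xs. isunit n (xs ! i) \<longrightarrow> isunit n (xs ! j) \<longrightarrow> i = j"
    proof (intro allI impI)
      fix i j assume ij: "i < length xs" "j < length xs" "isunit n (xs ! i)" "isunit n (xs ! j)"
      show "i = j"
      proof (rule ccontr)
        assume "i \<noteq> j"
        then have "has_wzs (Sset n) n xs"
          using two_units[OF sf P7 n1 sq _ ij(1,2) _ ij(3,4)] L3 o3 om by simp
        with nz show False by simp
      qed
    qed
    obtain ys p where yp: "seq_equiv (Sset n) n xs ys" "prime p" "p dvd n" "\<not> int p dvd ys ! 0"
        "\<forall>i\<in>{1..<length ys}. int p dvd ys ! i" "length ys = length xs"
        "\<not> has_wzs (Uset (n div p)) (n div p) (map (\<lambda>y. y mod int (n div p)) (tl ys))"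
      using step[OF sf P7 c2 sq L3 nz nu] by blast
    have "extremal (Uset (n div p)) (n div p) (map (\<lambda>y. y mod int (n div p)) (tl ys))"
      using T_extremal[OF sf P7 c2 yp(2,3) _ yp(7)] yp(6) L3 by simp
    then show "\<exists>ys p. seq_equiv (Sset n) n xs ys \<and> prime p \<and> p dvd n \<and>
              \<not> int p dvd ys ! 0 \<and> (\<forall>i\<in>{1..<length ys}. int p dvd ys ! i) \<and>
              extremal (Uset (n div p)) (n div p) (map (\<lambda>y. y mod int (n div p)) (tl ys))"
      using yp by blast
  next
    assume o2: "Omega n = 2"
    have c2: "2 \<le> card (prime_factors n)" using o2 om by simp
    have L2: "length xs = 2" using L o2 om by simp
    have L2': "length xs = card (prime_factors n)" using L o2 by simp
    have n1: "n > 1" using card_m1[OF sf] c2 by simp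
    show "length xs = 2" by (rule L2)
    show "(\<exists>ys p. seq_equiv (Sset n) n xs ys \<and> prime p \<and> p dvd n \<and>
              \<not> int p dvd ys ! 0 \<and> int p dvd ys ! 1 \<and>
              extremal (Uset (n div p)) (n div p) [ys ! 1 mod int (n div p)])
            \<or> (\<exists>ys. seq_equiv (Sset n) n xs ys \<and> ys ! 0 \<in> Sset n \<and>
                 (- (ys ! 1)) mod int n \<in> Uset n - Sset n)"
    proof (cases "isunit n (xs ! 0) \<and> isunit n (xs ! 1)")
      case True
      then show ?thesis using both_units[OF sf n1 sq L2 nz] by blast
    next
      case False
      have nu: "\<forall>i<length xs. \<forall>j<length xs. isunit n (xs ! i) \<longrightarrow> isunit n (xs ! j) \<longrightarrow> i = j"
      proof (intro allI impI)
        fix i j assume ij: "i < length xs" "j < length xs" "isunit n (xs ! i)" "isunit n (xs ! j)"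
        have i01: "i = 0 \<or> i = 1" and j01: "j = 0 \<or> j = 1" using ij(1,2) L2 by auto
        show "i = j"
        proof (rule ccontr)
          assume "i \<noteq> j"
          then have "isunit n (xs ! 0) \<and> isunit n (xs ! 1)" using i01 j01 ij(3,4) by auto
          with False show False by simp
        qed
      qed
      obtain ys p where yp: "seq_equiv (Sset n) n xs ys" "prime p" "p dvd n" "\<not> int p dvd ys ! 0"
          "\<forall>i\<in>{1..<length ys}. int p dvd ys ! i" "length ys = length xs"
          "\<not> has_wzs (Uset (n div p)) (n div p) (map (\<lambda>y. y mod int (n div p)) (tl ys))"
        using step[OF sf P7 c2 sq L2' nz nu] by blast
      have ex: "extremal (Uset (n div p)) (n div p) (map (\<lambda>y. y mod int (n div p)) (tl ys))"
        using T_extremal[OF sf P7 c2 yp(2,3) _ yp(7)] yp(6) L2' by simp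
      have ly2: "length ys = 2" using yp(6) L2 by simp
      have "extremal (Uset (n div p)) (n div p) [ys ! 1 mod int (n div p)]"
        using ex tl2[OF ly2, of "\<lambda>y. y mod int (n div p)"] by simp
      moreover have "int p dvd ys ! 1" using yp(5) ly2 by simp
      ultimately show ?thesis using yp by blast
    qed
  qed
qed


end
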